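(* Let $1\le p<2$, $f\in\mathcal H_0$, $u$ the solution of $\partial_tu+\partial J(u)\ni0$, $u(0)=f$, with extinction time $T_{\mathrm{ex}}$, $w(t):=u(t)/a(t)$ with $a(t)=(1-t/T_{\mathrm{ex}})^{1/(2-p)}$, and $\Lambda(t):=pJ(u(t))/\|u(t)\|^p$ for $0<t<T_{\mathrm{ex}}$. Let $w_*$ be an asymptotic profile, i.e. $w_*\in\mathcal H$ with $w(t_k)\to w_*$ strongly for some $t_k\nearrow T_{\mathrm{ex}}$. Then $w_*$ is a ground state if and only if $\lim_{t\nearrow T_{\mathrm{ex}}}\Lambda(t)=\lambda_1$.
   Context: $\mathcal H$ is a real Hilbert space with inner product $\langle\cdot,\cdot\rangle$ and norm $\|\cdot\|$. $J:\mathcal H\to\mathbb R\cup\{\infty\}$ is convex, lower semicontinuous, proper, with dense effective domain, and absolutely $p$-homogeneous: $J(cu)=|c|^pJ(u)$ for $c\ne0$, $J(0)=0$. $\partial J(u)=\{\zeta: J(u)+\langle\zeta,v-u\rangle\le J(v)\ \forall v\}$; $\mathcal N(J)=\{u:J(u)=0\}$; $\mathcal H_0:=\mathcal N(J)^\perp\setminus\{0\}$. Rayleigh quotient $R(u):=pJ(u)/\|u\|^p$; standing coercivity assumption $\lambda_1:=\inf_{u\in\mathcal H_0}R(u)>0$; a ground state is a minimizer of $R$ over $\mathcal H_0$. The gradient flow solution (Brezis) is the unique continuous $u:[0,\infty)\to\mathcal H$, Lipschitz on $[\delta,\infty)$ for all $\delta>0$, right-differentiable on $(0,\infty)$ with $u(0)=f$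 and $\partial_t^+u(t)=-\zeta(t)$, $\zeta(t)$ the minimal-norm element of $\partial J(u(t))$. $T_{\mathrm{ex}}:=\inf\{T>0:u(t)=0\ \forall t\ge T\}$ (finite for $p<2$). *)

theory Defs
  imports "HOL-Analysis.Analysis" "HOL-Library.Extended_Real"
begin

text \<open>Functionals J : H -> R \<union> {\<infinity>} are modelled as ereal-valued functions never taking -\<infinity>.\<close>

definition ereal_convex :: "('a::real_vector \<Rightarrow> ereal) \<Rightarrow> bool" where
  "ereal_convex J \<longleftrightarrow> (\<forall>x y t. 0 \<le> t \<and> t \<le> 1 \<longrightarrow>
      J (t *\<^sub>R x + (1 - t) *\<^sub>R y) \<le> ereal t * J x + ereal (1 - t) * J y)"

definition lower_semicont :: "('a::topological_space \<Rightarrow> ereal) \<Rightarrow> bool" where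
  "lower_semicont J \<longleftrightarrow> (\<forall>x. J x \<le> Liminf (at x) J)"

definition proper_fun :: "('a \<Rightarrow> ereal) \<Rightarrow> bool" where
  "proper_fun J \<longleftrightarrow> (\<forall>u. J u \<noteq> -\<infinity>) \<and> (\<exists>u. J u < \<infinity>)"

definition eff_dom :: "('a \<Rightarrow> ereal) \<Rightarrow> 'a set" where
  "eff_dom J = {u. J u < \<infinity>}"

definition abs_homogeneous :: "real \<Rightarrow> ('a::real_vector \<Rightarrow> ereal) \<Rightarrow> bool" where
  "abs_homogeneous p J \<longleftrightarrow> J 0 = 0 \<and>
     (\<forall>c u. c \<noteq> 0 \<longrightarrow> J (c *\<^sub>R u) = ereal (\<bar>c\<bar> powr p) * J u)"

definition admissible :: "real \<Rightarrow> ('a::{real_inner,complete_space} \<Rightarrow> ereal) \<Rightarrow> bool" where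
  "admissible p J \<longleftrightarrow> ereal_convex J \<and> lower_semicont J \<and> proper_fun J \<and>
     closure (eff_dom J) = UNIV \<and> abs_homogeneous p J"

definition subdiff :: "('a::real_inner \<Rightarrow> ereal) \<Rightarrow> 'a \<Rightarrow> 'a set" where
  "subdiff J u = {\<zeta>. \<forall>v. J u + ereal (\<zeta> \<bullet> (v - u)) \<le> J v}"

definition null_set :: "('a \<Rightarrow> ereal) \<Rightarrow> 'a set" where
  "null_set J = {u. J u = 0}"

definition H0 :: "('a::real_inner \<Rightarrow> ereal) \<Rightarrow> 'a set" where
  "H0 J = orthogonal_comp (null_set J) - {0}"

definition rayleigh :: "real \<Rightarrow> ('a::real_normed_vector \<Rightarrow> ereal) \<Rightarrow> 'a \<Rightarrow> ereal" where
  "rayleigh p J u = ereal p * J u / ereal (norm u powr p)"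

definition lambda1 :: "real \<Rightarrow> ('a::real_inner \<Rightarrow> ereal) \<Rightarrow> ereal" where
  "lambda1 p J = (INF u\<in>H0 J. rayleigh p J u)"

definition ground_state :: "real \<Rightarrow> ('a::real_inner \<Rightarrow> ereal) \<Rightarrow> 'a \<Rightarrow> bool" where
  "ground_state p J w \<longleftrightarrow> w \<in> H0 J \<and> (\<forall>v\<in>H0 J. rayleigh p J w \<le> rayleigh p J v)"

definition min_norm_subgrad :: "('a::real_inner \<Rightarrow> ereal) \<Rightarrow> 'a \<Rightarrow> 'a \<Rightarrow> bool" where
  "min_norm_subgrad J u \<zeta> \<longleftrightarrow> \<zeta> \<in> subdiff J u \<and> (\<forall>\<eta>\<in>subdiff J u. norm \<zeta> \<le> norm \<eta>)"

text \<open>Brezis gradient flow solution of  u' + \<partial>J(u) \<ni> 0, u(0) = f.\<close>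
definition gradient_flow :: "('a::real_inner \<Rightarrow> ereal) \<Rightarrow> 'a \<Rightarrow> (real \<Rightarrow> 'a) \<Rightarrow> bool" where
  "gradient_flow J f u \<longleftrightarrow>
     continuous_on {0..} u \<and>
     (\<forall>\<delta>>0. \<exists>L. L-lipschitz_on {\<delta>..} u) \<and>
     u 0 = f \<and>
     (\<forall>t>0. \<exists>\<zeta>. min_norm_subgrad J (u t) \<zeta> \<and>
               (u has_vector_derivative (- \<zeta>)) (at t within {t..}))"

definition extinction_time :: "(real \<Rightarrow> 'a::zero) \<Rightarrow> real" where
  "extinction_time u = Inf {T. T > 0 \<and> (\<forall>t\<ge>T. u t = 0)}"

end

theory Submission
  imports Defs
begin

lemma decr_dini:
  fixes f :: "real \<Rightarrow> real"
  assumes ab: "a \<le> b" and cont: "continuous_on {a..b} f"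
    and dini: "\<And>x e. a \<le> x \<Longrightarrow> x < b \<Longrightarrow> 0 < e \<Longrightarrow>
        \<exists>d>0. \<forall>h. 0 < h \<and> h < d \<longrightarrow> f (x+h) \<le> f x + e*h"
  shows "f b \<le> f a"
proof -
  have key: "f b \<le> f a + e*(b-a)" if e: "e > 0" for e
  proof -
    define S where "S = {x\<in>{a..b}. \<forall>y\<in>{a..x}. f y \<le> f a + e*(y-a)}"
    define s where "s = Sup S"
    have aS: "a \<in> S" using ab by (auto simp: S_def)
    have bdd: "bdd_above S" unfolding S_def by (rule bdd_aboveI[of _ b]) auto
    have as: "a \<le> s" unfolding s_def using aS bdd by (rule cSup_upper)
    have sb: "s \<le> b" unfolding s_def using aS by (intro cSup_least) (auto simp: S_def)
    have below: "f y \<le> f a + e*(y-a)" if "a \<le> y" "y < s" for y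
    proof -
      obtain x where "x \<in> S" "y < x" using less_cSupD[of S y] aS \<open>y < s\<close> s_def by auto
      then show ?thesis using that unfolding S_def by auto
    qed
    define g where "g = (\<lambda>y. f y - (f a + e*(y-a)))"
    define C where "C = {a..b} \<inter> g -` {..0}"
    have "closed C"
    proof -
      have "continuous_on {a..b} g" unfolding g_def
        by (intro continuous_intros cont)
      then show ?thesis unfolding C_def
        by (intro continuous_closed_preimage) auto
    qed
    have sC: "{a..s} \<subseteq> C"
    proof (cases "a < s")
      case True
      have "{a..<s} \<subseteq> C" using below sb unfolding C_def g_def by auto
      then have "closure {a..<s} \<subseteq> C" using \<open>closed C\<close> by (rule closure_minimal)
      then show ?thesis using True by simp
    next
      case False
      then have "s = a" using as by simp
      then show ?thesis using ab unfolding C_def g_def by auto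
    qed
    have sS: "s \<in> S" using sC as sb unfolding S_def C_def g_def by auto
    have "s = b"
    proof (rule ccontr)
      assume "s \<noteq> b"
      then have "s < b" using sb by simp
      obtain d where d: "d > 0" "\<forall>h. 0 < h \<and> h < d \<longrightarrow> f (s+h) \<le> f s + e*h"
        using dini[OF as \<open>s < b\<close> e] by blast
      define x where "x = min (s + d/2) b"
      have "x \<in> S"
        unfolding S_def
      proof (intro CollectI conjI ballI)
        show "x \<in> {a..b}" using as \<open>s < b\<close> d unfolding x_def by auto
        fix y assume y: "y \<in> {a..x}"
        show "f y \<le> f a + e*(y-a)"
        proof (cases "y \<le> s")
          case True then show ?thesis using sS y unfolding S_def by auto
        next
          case False
          then have "f (s + (y-s)) \<le> f s + e*(y-s)" using d y unfolding x_def by (intro d(2)[rule_format]) auto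
          moreover have "f s \<le> f a + e*(s-a)" using sS as unfolding S_def by auto
          ultimately show ?thesis by (simp add: algebra_simps)
        qed
      qed
      then have "x \<le> s" unfolding s_def using bdd by (rule cSup_upper)
      then show False using \<open>s < b\<close> d unfolding x_def by auto
    qed
    then show ?thesis using sS ab unfolding S_def by auto
  qed
  show ?thesis
  proof (rule ccontr)
    assume "\<not> f b \<le> f a"
    define e where "e = (f b - f a) / (2*(b-a+1))"
    have e: "e > 0" using \<open>\<not> f b \<le> f a\<close> ab unfolding e_def by auto
    have "e*(b-a) < f b - f a"
    proof -
      have "e*(b-a) \<le> e*(b-a+1)" using e by simp
      also have "... = (f b - f a)/2" unfolding e_def using ab by (simp add: field_simps)
      also have "... < f b - f a" using \<open>\<not> f b \<le> f a\<close> by simp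
      finally show ?thesis .
    qed
    then show False using key[OF e] by simp
  qed
qed


lemma decr_dini_open:
  fixes f :: "real \<Rightarrow> real"
  assumes ab: "a \<le> b" and cont: "continuous_on {a..b} f"
    and dini: "\<And>x e. a < x \<Longrightarrow> x < b \<Longrightarrow> 0 < e \<Longrightarrow>
        \<exists>d>0. \<forall>h. 0 < h \<and> h < d \<longrightarrow> f (x+h) \<le> f x + e*h"
  shows "f b \<le> f a"
proof (rule ccontr)
  assume nle: "\<not> f b \<le> f a"
  then have "a \<noteq> b" by auto
  then have ab': "a < b" using ab by simp
  obtain d where d: "d > 0" "\<forall>x'\<in>{a..b}. dist x' a < d \<longrightarrow> dist (f x') (f a) < f b - f a"
  proof -
    have "a \<in> {a..b}" using ab by simp
    moreover have "f b - f a > 0" using nle by simp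
    ultimately have "\<exists>d>0. \<forall>x'\<in>{a..b}. dist x' a < d \<longrightarrow> dist (f x') (f a) < f b - f a"
      using cont unfolding continuous_on_iff by (elim ballE allE[of _ "f b - f a"]) auto
    then show ?thesis using that by blast
  qed
  define a' where "a' = min (a + d/2) ((a+b)/2)"
  have a': "a < a'" "a' < b" using d ab' unfolding a'_def by (auto simp: min_def)
  have "f b \<le> f a'"
  proof (rule decr_dini[of a' b f])
    show "a' \<le> b" using a' by simp
    show "continuous_on {a'..b} f" by (rule continuous_on_subset[OF cont]) (use a' in auto)
    fix x e :: real assume "a' \<le> x" "x < b" "0 < e"
    moreover have "a < x" using a' \<open>a' \<le> x\<close> by simp
    ultimately show "\<exists>d>0. \<forall>h. 0 < h \<and> h < d \<longrightarrow> f (x+h) \<le> f x + e*h"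
      using dini[of x e] by blast
  qed
  moreover have "dist (f a') (f a) < f b - f a"
  proof -
    have "a' \<in> {a..b}" "dist a' a < d" using d a' unfolding a'_def by (auto simp: dist_real_def)
    then show ?thesis using d(2) by blast
  qed
  ultimately show False unfolding dist_real_def by linarith
qed

lemma deriv_dini:
  fixes f :: "real \<Rightarrow> real"
  assumes der: "(f has_real_derivative D) (at_right x)" and D: "D \<le> 0" and e: "0 < e"
  shows "\<exists>d>0. \<forall>h. 0 < h \<and> h < d \<longrightarrow> f (x+h) \<le> f x + e*h"
proof -
  have "((\<lambda>y. (f y - f x) / (y - x)) \<longlongrightarrow> D) (at_right x)"
    using der by (simp add: has_field_derivative_iff)
  then have "eventually (\<lambda>y. (f y - f x) / (y - x) < D + e) (at_right x)"
    using e by (intro order_tendstoD(2)) auto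
  then obtain b where b: "b > x" "\<forall>y>x. y < b \<longrightarrow> (f y - f x) / (y - x) < D + e"
    unfolding eventually_at_right_field by blast
  show ?thesis
  proof (intro exI[of _ "b - x"] conjI allI impI)
    show "b - x > 0" using b by simp
    fix h assume h: "0 < h \<and> h < b - x"
    then have "(f (x+h) - f x) / h < D + e" using b(2)[rule_format, of "x+h"] by simp
    then have "f (x+h) - f x < (D + e) * h" using h by (subst (asm) divide_less_eq) auto
    moreover have "D * h \<le> 0" using D h by (simp add: mult_nonpos_nonneg)
    ultimately show "f (x+h) \<le> f x + e*h" by (simp add: algebra_simps)
  qed
qed

lemma decr_deriv:
  fixes f :: "real \<Rightarrow> real"
  assumes ab: "a \<le> b" and cont: "continuous_on {a..b} f"
    and der: "\<And>x. a < x \<Longrightarrow> x < b \<Longrightarrow> (f has_real_derivative f' x) (at_right x)"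
    and neg: "\<And>x. a < x \<Longrightarrow> x < b \<Longrightarrow> f' x \<le> 0"
  shows "f b \<le> f a"
proof (rule decr_dini_open[OF ab cont])
  fix x e :: real assume "a < x" "x < b" "0 < e"
  then show "\<exists>d>0. \<forall>h. 0 < h \<and> h < d \<longrightarrow> f (x+h) \<le> f x + e*h"
    using deriv_dini[OF der[of x] neg[of x]] by blast
qed

context
  fixes p :: real and J :: "'a::{real_inner,complete_space} \<Rightarrow> ereal"
  assumes adm: "admissible p J" and p1: "1 \<le> p"
begin

lemma J_0: "J 0 = 0"
  using adm unfolding admissible_def abs_homogeneous_def by auto

lemma J_hom: "c \<noteq> 0 \<Longrightarrow> J (c *\<^sub>R u) = ereal (\<bar>c\<bar> powr p) * J u"
  using adm unfolding admissible_def abs_homogeneous_def by auto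

lemma J_hom_pos: "c > 0 \<Longrightarrow> J (c *\<^sub>R u) = ereal (c powr p) * J u"
  using J_hom[of c u] by simp

lemma J_not_minf: "J u \<noteq> -\<infinity>"
  using adm unfolding admissible_def proper_fun_def by auto

lemma J_convex: "0 \<le> t \<Longrightarrow> t \<le> 1 \<Longrightarrow>
   J (t *\<^sub>R x + (1 - t) *\<^sub>R y) \<le> ereal t * J x + ereal (1 - t) * J y"
  using adm unfolding admissible_def ereal_convex_def by auto

lemma J_nonneg: "0 \<le> J u"
proof -
  have "J ((1/2) *\<^sub>R u + (1 - 1/2) *\<^sub>R (-u)) \<le> ereal (1/2) * J u + ereal (1 - 1/2) * J (-u)"
    by (rule J_convex) auto
  moreover have "(1/2) *\<^sub>R u + (1 - 1/2) *\<^sub>R (-u) = (0::'a)" by (simp add: algebra_simps)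
  moreover have "J (-u) = J u"
    using J_hom[of "-1" u] by simp
  ultimately have "0 \<le> ereal (1/2) * J u + ereal (1/2) * J u" using J_0 by simp
  then show ?thesis using J_not_minf[of u]
    by (cases "J u") auto
qed

lemma subgrad_finite:
  assumes "z \<in> subdiff J u"
  shows "J u = ereal (real_of_ereal (J u))"
proof -
  have "J u + ereal (z \<bullet> (0 - u)) \<le> J 0" using assms unfolding subdiff_def by blast
  then have "J u \<noteq> \<infinity>" using J_0 by auto
  then show ?thesis using J_not_minf[of u] by (cases "J u") auto
qed

lemma subgrad_ineq:
  assumes "z \<in> subdiff J u" "J v = ereal y"
  shows "real_of_ereal (J u) + z \<bullet> (v - u) \<le> y"
proof -
  have "J u + ereal (z \<bullet> (v - u)) \<le> J v" using assms(1) unfolding subdiff_def by blast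
  then show ?thesis using assms(2) subgrad_finite[OF assms(1)]
    by (metis ereal_less_eq(3) plus_ereal.simps(1))
qed

lemma real_J_nonneg: "0 \<le> real_of_ereal (J u)"
  using J_nonneg[of u] by (simp add: real_of_ereal_pos)

lemma subgrad_mono:
  assumes "z1 \<in> subdiff J u1" "z2 \<in> subdiff J u2"
  shows "0 \<le> (z1 - z2) \<bullet> (u1 - u2)"
proof -
  have a: "real_of_ereal (J u1) + z1 \<bullet> (u2 - u1) \<le> real_of_ereal (J u2)"
    using subgrad_ineq[OF assms(1) subgrad_finite[OF assms(2)]] .
  have b: "real_of_ereal (J u2) + z2 \<bullet> (u1 - u2) \<le> real_of_ereal (J u1)"
    using subgrad_ineq[OF assms(2) subgrad_finite[OF assms(1)]] .
  have "(z1 - z2) \<bullet> (u1 - u2) = - (z1 \<bullet> (u2 - u1)) - z2 \<bullet> (u1 - u2)"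
    by (simp add: algebra_simps inner_diff_left inner_diff_right)
  then show ?thesis using a b by linarith
qed

lemma subgrad_orth:
  assumes z: "z \<in> subdiff J u" and n: "J n = 0"
  shows "z \<bullet> n = 0"
proof -
  define j where "j = real_of_ereal (J u)"
  have Ju: "J u = ereal j" unfolding j_def by (rule subgrad_finite[OF z])
  have bound: "j + s * (z \<bullet> n) \<le> 2 powr (p-1) * j" for s
  proof -
    have "J ((1/2) *\<^sub>R (2 *\<^sub>R u) + (1 - 1/2) *\<^sub>R ((2 * s) *\<^sub>R n)) \<le>
          ereal (1/2) * J (2 *\<^sub>R u) + ereal (1 - 1/2) * J ((2 * s) *\<^sub>R n)"
      by (rule J_convex) auto
    moreover have "(1/2) *\<^sub>R (2 *\<^sub>R u) + (1 - 1/2) *\<^sub>R ((2 * s) *\<^sub>R n) = u + s *\<^sub>R n"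
      by (simp add: algebra_simps)
    moreover have "J (2 *\<^sub>R u) = ereal (2 powr p * j)" using J_hom_pos[of 2 u] Ju by simp
    moreover have "J ((2 * s) *\<^sub>R n) = 0"
      using J_hom[of "2 * s" n] n J_0 by (cases "s = 0") auto
    ultimately have le0: "J (u + s *\<^sub>R n) \<le> ereal (1/2 * (2 powr p * j))" by simp
    have eq: "1/2 * (2 powr p * j) = 2 powr (p-1) * j"
      by (simp add: powr_diff[of 2 p 1])
    from le0 have le: "J (u + s *\<^sub>R n) \<le> ereal (2 powr (p-1) * j)" by (simp only: eq)
    have "J u + ereal (z \<bullet> ((u + s *\<^sub>R n) - u)) \<le> J (u + s *\<^sub>R n)"
      using z unfolding subdiff_def by blast
    then have "ereal (j + s * (z \<bullet> n)) \<le> ereal (2 powr (p-1) * j)"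
      using le Ju by (simp add: inner_scaleR_right del: ereal_less_eq)
    then show ?thesis by simp
  qed
  show ?thesis
  proof (rule ccontr)
    assume ne: "z \<bullet> n \<noteq> 0"
    define s where "s = (2 powr (p-1) * j - j + 1) / (z \<bullet> n)"
    have "s * (z \<bullet> n) = 2 powr (p-1) * j - j + 1" unfolding s_def using ne by simp
    then show False using bound[of s] by simp
  qed
qed

lemma euler:
  assumes z: "z \<in> subdiff J u"
  shows "z \<bullet> u = p * real_of_ereal (J u)"
proof -
  define j where "j = real_of_ereal (J u)"
  define a where "a = z \<bullet> u"
  have Ju: "J u = ereal j" unfolding j_def by (rule subgrad_finite[OF z])
  have ineq: "j + (s - 1) * a \<le> s powr p * j" if s: "s > 0" for s
  proof -
    have "J u + ereal (z \<bullet> (s *\<^sub>R u - u)) \<le> J (s *\<^sub>R u)"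
      using z unfolding subdiff_def by blast
    moreover have "J (s *\<^sub>R u) = ereal (s powr p * j)" using J_hom_pos[OF s, of u] Ju by simp
    moreover have "z \<bullet> (s *\<^sub>R u - u) = (s - 1) * a"
      unfolding a_def by (simp add: inner_diff_right algebra_simps)
    ultimately show ?thesis using Ju by simp
  qed
  have der: "((\<lambda>y. (y powr p - 1 powr p) / (y - 1)) \<longlongrightarrow> p * 1 powr (p - 1)) (at 1)"
  proof -
    have "((\<lambda>x. x powr p) has_real_derivative p * 1 powr (p - 1)) (at 1)"
      using has_real_derivative_powr[of 1 p] by simp
    then show ?thesis by (simp add: has_field_derivative_iff)
  qed
  then have der': "((\<lambda>y. (y powr p - 1) / (y - 1) * j) \<longlongrightarrow> p * j) (at 1)"
    using tendsto_mult[OF der tendsto_const[of j]] by simp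
  have "a \<le> p * j"
  proof (rule tendsto_le[OF _ tendsto_mono[OF _ der'] tendsto_const])
    show "at_right (1::real) \<noteq> bot" by simp
    show "at_right (1::real) \<le> at 1" by (simp add: at_le)
    show "\<forall>\<^sub>F x in at_right 1. a \<le> (x powr p - 1) / (x - 1) * j"
      unfolding eventually_at_right_field
    proof (intro exI[of _ 2] conjI allI impI)
      fix y :: real assume "1 < y" "y < 2"
      then have "j + (y - 1) * a \<le> y powr p * j" using ineq by simp
      then have "(y-1) * a \<le> y powr p * j - j" by simp
      then show "a \<le> (y powr p - 1) / (y - 1) * j" using \<open>1 < y\<close>
        by (simp add: field_simps)
    qed simp
  qed
  moreover have "p * j \<le> a"
  proof (rule tendsto_le[OF _ tendsto_const tendsto_mono[OF _ der']])
    show "at_left (1::real) \<noteq> bot" by simp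
    show "at_left (1::real) \<le> at 1" by (simp add: at_le)
    show "\<forall>\<^sub>F x in at_left 1. (x powr p - 1) / (x - 1) * j \<le> a"
      unfolding eventually_at_left_field
    proof (intro exI[of _ "1/2"] conjI allI impI)
      fix y :: real assume "1/2 < y" "y < 1"
      then have "j + (y - 1) * a \<le> y powr p * j" using ineq by simp
      then have "y powr p * j - j \<ge> (y-1) * a" by simp
      then show "(y powr p - 1) / (y - 1) * j \<le> a" using \<open>y < 1\<close>
        by (simp add: field_simps)
    qed simp
  qed
  ultimately show ?thesis unfolding a_def j_def by simp
qed

end

lemma vd_quot:
  fixes f :: "real \<Rightarrow> 'a::real_normed_vector"
  assumes "(f has_vector_derivative D) (at_right x)"
  shows "((\<lambda>y. (1/(y-x)) *\<^sub>R (f y - f x)) \<longlongrightarrow> D) (at_right x)"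
proof -
  have "((\<lambda>y. (1 / norm (y - x)) *\<^sub>R (f y - (f x + (y - x) *\<^sub>R D))) \<longlongrightarrow> 0) (at_right x)"
    using assms unfolding has_vector_derivative_def has_derivative_within by blast
  then have "((\<lambda>y. (1 / norm (y - x)) *\<^sub>R (f y - (f x + (y - x) *\<^sub>R D)) + D) \<longlongrightarrow> 0 + D) (at_right x)"
    by (intro tendsto_add tendsto_const)
  moreover have "eventually (\<lambda>y. (1 / norm (y - x)) *\<^sub>R (f y - (f x + (y - x) *\<^sub>R D)) + D
      = (1/(y-x)) *\<^sub>R (f y - f x)) (at_right x)"
    unfolding eventually_at_right_field
  proof (intro exI[of _ "x+1"] conjI allI impI)
    fix y assume "x < y" "y < x + 1"
    have e1: "f y - (f x + (y - x) *\<^sub>R D) = (f y - f x) - (y-x) *\<^sub>R D" by (simp add: algebra_simps)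
    have e2: "(1/(y-x)) *\<^sub>R ((y-x) *\<^sub>R D) = D" using \<open>x < y\<close> by simp
    have e3: "norm (y - x) = y - x" using \<open>x < y\<close> by simp
    show "(1 / norm (y - x)) *\<^sub>R (f y - (f x + (y - x) *\<^sub>R D)) + D = (1/(y-x)) *\<^sub>R (f y - f x)"
      unfolding e1 e3 scaleR_right_diff_distrib e2 by simp
  qed simp
  ultimately show ?thesis by (simp add: tendsto_cong)
qed

lemma vd_quot0:
  fixes f :: "real \<Rightarrow> 'a::real_normed_vector"
  assumes "(f has_vector_derivative D) (at_right x)"
  shows "((\<lambda>h. (1/h) *\<^sub>R (f (x+h) - f x)) \<longlongrightarrow> D) (at_right 0)"
  using vd_quot[OF assms] unfolding filterlim_at_right_to_0[of _ _ x] by (simp add: add.commute)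

lemma vd_shift:
  fixes f :: "real \<Rightarrow> 'a::real_normed_vector"
  assumes "(f has_vector_derivative D) (at_right (x+h))"
  shows "((\<lambda>t. f (t+h)) has_vector_derivative D) (at_right x)"
proof -
  have "((\<lambda>t. t+h) has_vector_derivative 1) (at x within {x<..})"
    by (auto intro!: derivative_eq_intros)
  moreover have "(\<lambda>t. t+h) ` {x<..} = {x+h<..}"
  proof
    show "{x+h<..} \<subseteq> (\<lambda>t. t+h) ` {x<..}"
    proof
      fix y assume "y \<in> {x+h<..}"
      then show "y \<in> (\<lambda>t. t+h) ` {x<..}" by (intro image_eqI[of _ _ "y - h"]) auto
    qed
  qed auto
  then have "(f has_vector_derivative D) (at ((\<lambda>t. t+h) x) within (\<lambda>t. t+h) ` {x<..})"
    using assms by simp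
  ultimately have "(f \<circ> (\<lambda>t. t+h) has_vector_derivative 1 *\<^sub>R D) (at x within {x<..})"
    by (rule vector_diff_chain_within)
  then show ?thesis by (simp add: o_def)
qed

lemma vd_inner:
  fixes u v :: "real \<Rightarrow> 'a::real_inner"
  assumes "(u has_vector_derivative u') (at x within S)" "(v has_vector_derivative v') (at x within S)"
  shows "((\<lambda>t. u t \<bullet> v t) has_real_derivative (u x \<bullet> v' + u' \<bullet> v x)) (at x within S)"
proof -
  have "((\<lambda>t. u t \<bullet> v t) has_derivative (\<lambda>h. u x \<bullet> (h *\<^sub>R v') + (h *\<^sub>R u') \<bullet> v x)) (at x within S)"
    using has_derivative_inner[OF assms[unfolded has_vector_derivative_def]] .
  moreover have "(\<lambda>h. u x \<bullet> (h *\<^sub>R v') + (h *\<^sub>R u') \<bullet> v x) = (\<lambda>h. (u x \<bullet> v' + u' \<bullet> v x) * h)"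
    by (auto simp: algebra_simps)
  ultimately show ?thesis by (simp add: has_field_derivative_def)
qed

lemma contraction:
  fixes u v a b :: "real \<Rightarrow> 'a::real_inner"
  assumes se: "s \<le> e" and cu: "continuous_on {s..e} u" and cv: "continuous_on {s..e} v"
    and du: "\<And>t. s < t \<Longrightarrow> t < e \<Longrightarrow> (u has_vector_derivative - a t) (at_right t)"
    and dv: "\<And>t. s < t \<Longrightarrow> t < e \<Longrightarrow> (v has_vector_derivative - b t) (at_right t)"
    and mono: "\<And>t. s < t \<Longrightarrow> t < e \<Longrightarrow> 0 \<le> (a t - b t) \<bullet> (u t - v t)"
  shows "norm (u e - v e) \<le> norm (u s - v s)"
proof -
  define F where "F t = (u t - v t) \<bullet> (u t - v t)" for t
  have "F e \<le> F s"
  proof (rule decr_deriv[OF se, where f' = "\<lambda>t. - 2 * ((a t - b t) \<bullet> (u t - v t))"])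
    show "continuous_on {s..e} F" unfolding F_def by (intro continuous_intros cu cv)
    fix t assume t: "s < t" "t < e"
    have d: "((\<lambda>t. u t - v t) has_vector_derivative (- a t) - (- b t)) (at_right t)"
      using du[OF t] dv[OF t] by (rule has_vector_derivative_diff)
    have "(F has_real_derivative ((u t - v t) \<bullet> ((- a t) - (- b t)) + ((- a t) - (- b t)) \<bullet> (u t - v t))) (at_right t)"
      unfolding F_def using vd_inner[OF d d] .
    moreover have "(u t - v t) \<bullet> ((- a t) - (- b t)) + ((- a t) - (- b t)) \<bullet> (u t - v t) = - 2 * ((a t - b t) \<bullet> (u t - v t))"
      by (simp add: inner_commute algebra_simps inner_diff_left inner_diff_right)
    ultimately show "(F has_real_derivative - 2 * ((a t - b t) \<bullet> (u t - v t))) (at_right t)" by simp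
    show "- 2 * ((a t - b t) \<bullet> (u t - v t)) \<le> 0" using mono[OF t] by simp
  qed
  then show ?thesis unfolding F_def by (simp add: norm_le)
qed

lemma nested_convex:
  fixes C :: "nat \<Rightarrow> 'a::{real_inner,complete_space} set"
  assumes cvx: "\<And>n. convex (C n)" and ne: "\<And>n. C n \<noteq> {}" and dec: "\<And>n. C (Suc n) \<subseteq> C n"
    and bnd: "\<And>n. C n \<subseteq> cball 0 B"
  shows "\<exists>z. \<forall>n. z \<in> closure (C n)"
proof -
  have sub: "C m \<subseteq> C n" if "n \<le> m" for n m
    using lift_Suc_antimono_le[of C, OF dec that] .
  define d where "d n = Inf (norm ` C n)" for n
  have bb: "bdd_below (norm ` C n)" for n by (rule bdd_belowI[of _ 0]) auto
  have d_le: "d n \<le> norm x" if "x \<in> C n" for n x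
    unfolding d_def using bb that by (intro cInf_lower) auto
  have d_mono: "d n \<le> d m" if "n \<le> m" for n m
    unfolding d_def using ne[of m] bb[of n] sub[OF that] by (intro cInf_superset_mono) auto
  have d_B: "d n \<le> B" for n
  proof -
    obtain x where "x \<in> C n" using ne by blast
    then show ?thesis using d_le[of x n] bnd[of n] by force
  qed
  have d_nn: "0 \<le> d n" for n
    unfolding d_def using ne[of n] by (intro cInf_greatest) auto
  have inc: "incseq d" using d_mono by (simp add: incseq_def)
  obtain L where L: "d \<longlonglongrightarrow> L" "\<forall>i. d i \<le> L"
    using incseq_convergent[OF inc, of B] d_B by blast
  have "\<exists>x\<in>C n. norm x < d n + 1/(real n+1)" for n
    using cInf_lessD[of "norm ` C n" "d n + 1/(real n+1)"] ne[of n] unfolding d_def by auto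
  then obtain z where z: "\<And>n. z n \<in> C n" "\<And>n. norm (z n) < d n + 1/(real n+1)" by metis
  define E where "E n = 4 * ((L + 1/(real n+1))^2 - (d n)^2)" for n
  have E_bound: "(norm (z n - z m))^2 \<le> E n" if nm: "n \<le> m" for n m
  proof -
    have mid: "(1/2) *\<^sub>R (z n + z m) \<in> C n"
    proof -
      have "(1/2) *\<^sub>R z n + (1/2) *\<^sub>R z m \<in> C n"
        using cvx[of n] z(1)[of n] sub[OF nm] z(1)[of m] unfolding convex_def by fastforce
      then show ?thesis by (simp add: scaleR_right_distrib)
    qed
    have "d n \<le> norm ((1/2) *\<^sub>R (z n + z m))" using d_le[OF mid] .
    then have h1: "d n \<le> norm (z n + z m) / 2" by simp
    have par: "(norm (z n - z m))^2 = 2 * (norm (z n))^2 + 2 * (norm (z m))^2 - (norm (z n + z m))^2"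
      by (simp add: power2_norm_eq_inner algebra_simps inner_add_left inner_add_right inner_diff_left inner_diff_right inner_commute)
    have zn: "norm (z n) \<le> L + 1/(real n+1)" using z(2)[of n] L(2)[rule_format, of n] by simp
    have zm: "norm (z m) \<le> L + 1/(real n+1)"
    proof -
      have "1/(real m+1) \<le> 1/(real n+1)" using nm by (simp add: frac_le)
      then show ?thesis using z(2)[of m] L(2)[rule_format, of m] by simp
    qed
    have "(norm (z n))^2 \<le> (L + 1/(real n+1))^2" using zn by (simp add: power_mono)
    moreover have "(norm (z m))^2 \<le> (L + 1/(real n+1))^2" using zm by (simp add: power_mono)
    moreover have "(2 * d n)^2 \<le> (norm (z n + z m))^2" using h1 d_nn[of n] by (intro power_mono) auto
    ultimately show ?thesis using par unfolding E_def by (simp add: power_mult_distrib)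
  qed
  have h0: "(\<lambda>n. 1/(real n + 1)) \<longlonglongrightarrow> 0"
    using LIMSEQ_inverse_real_of_nat by (simp add: inverse_eq_divide add.commute)
  have E_lim: "E \<longlonglongrightarrow> 4 * ((L + 0)^2 - L^2)"
    unfolding E_def by (intro tendsto_intros L(1) h0)
  have "Cauchy z"
  proof (rule metric_CauchyI)
    fix e :: real assume e: "e > 0"
    have "eventually (\<lambda>n. E n < e^2) sequentially"
      using E_lim e by (intro order_tendstoD(2)) auto
    then obtain M where M: "\<And>n. n \<ge> M \<Longrightarrow> E n < e^2" by (auto simp: eventually_sequentially)
    have "dist (z n) (z m) < e" if "n \<ge> M" "m \<ge> M" for n m
    proof -
      have "(norm (z n - z m))^2 < e^2"
      proof (cases "n \<le> m")
        case True then show ?thesis using E_bound[OF True] M[OF \<open>n \<ge> M\<close>] by simp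
      next
        case False
        then have "(norm (z m - z n))^2 < e^2" using E_bound[of m n] M[OF \<open>m \<ge> M\<close>] by simp
        then show ?thesis by (simp add: norm_minus_commute)
      qed
      then show ?thesis using e by (simp add: dist_norm power_less_imp_less_base)
    qed
    then show "\<exists>M. \<forall>m\<ge>M. \<forall>n\<ge>M. dist (z m) (z n) < e" by blast
  qed
  then obtain zl where zl: "z \<longlonglongrightarrow> zl" using Cauchy_convergent_iff convergent_def by blast
  have "zl \<in> closure (C n)" for n
  proof -
    have "(\<lambda>k. z (k + n)) \<longlonglongrightarrow> zl" using zl by (rule LIMSEQ_ignore_initial_segment)
    moreover have "\<forall>k. z (k + n) \<in> C n" using z(1) sub[of n] by (meson le_add2 subsetD)
    ultimately show ?thesis unfolding closure_sequential by (intro exI[of _ "\<lambda>k. z (k + n)"]) simp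
  qed
  then show ?thesis by blast
qed

context
  fixes p :: real and J :: "'a::{real_inner,complete_space} \<Rightarrow> ereal"
  assumes adm: "admissible p J" and p1: "1 \<le> p"
begin

lemma subgrad_mid:
  assumes z1: "z1 \<in> subdiff J u" and z2: "z2 \<in> subdiff J u"
  shows "(1/2) *\<^sub>R (z1 + z2) \<in> subdiff J u"
  unfolding subdiff_def
proof (intro CollectI allI)
  fix v
  have Ju: "J u = ereal (real_of_ereal (J u))" using subgrad_finite[OF adm p1 z1] .
  show "J u + ereal ((1/2) *\<^sub>R (z1 + z2) \<bullet> (v - u)) \<le> J v"
  proof (cases "J v")
    case (real jv)
    have a: "real_of_ereal (J u) + z1 \<bullet> (v - u) \<le> jv" using subgrad_ineq[OF adm p1 z1 real] .
    have b: "real_of_ereal (J u) + z2 \<bullet> (v - u) \<le> jv" using subgrad_ineq[OF adm p1 z2 real] .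
    have "real_of_ereal (J u) + (1/2) *\<^sub>R (z1 + z2) \<bullet> (v - u) \<le> jv"
      using a b by (simp add: inner_add_left field_simps)
    then show ?thesis using Ju real by (metis ereal_less_eq(3) plus_ereal.simps(1))
  next
    case PInf then show ?thesis by simp
  next
    case MInf then show ?thesis using J_not_minf[OF adm p1] by simp
  qed
qed

lemma closure_in_closed_convex:
  fixes y :: "nat \<Rightarrow> 'a" and K :: "'a set"
  assumes "closed K" "convex K" "\<And>n. n \<ge> N \<Longrightarrow> y n \<in> K" "z \<in> closure (convex hull (y ` {N..}))"
  shows "z \<in> K"
proof -
  have "convex hull (y ` {N..}) \<subseteq> K" using assms(2,3) by (intro hull_minimal) auto
  then have "closure (convex hull (y ` {N..})) \<subseteq> K" using assms(1) by (rule closure_minimal)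
  then show ?thesis using assms(4) by blast
qed

lemma subgrad_closure:
  assumes m: "min_norm_subgrad J u0 m"
    and ysub: "\<And>n v. ereal (real_of_ereal (J u0) + y n \<bullet> (v - u0) - e n) \<le> J v"
    and e0: "e \<longlonglongrightarrow> 0"
    and ynorm: "\<And>n. norm (y n) \<le> norm m"
    and dpos: "\<delta> > 0" and yin: "\<And>n. y n \<bullet> m \<le> m \<bullet> m - \<delta>"
  shows False
proof -
  have msub: "m \<in> subdiff J u0" using m unfolding min_norm_subgrad_def by blast
  define j0 where "j0 = real_of_ereal (J u0)"
  have Ju0: "J u0 = ereal j0" unfolding j0_def using subgrad_finite[OF adm p1 msub] .
  define C where "C N = convex hull (y ` {N..})" for N
  obtain z where z: "\<And>N. z \<in> closure (C N)"
  proof -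
    have "\<exists>z. \<forall>N. z \<in> closure (C N)"
    proof (rule nested_convex[where B = "norm m"])
      fix n
      show "convex (C n)" unfolding C_def by (rule convex_convex_hull)
      show "C n \<noteq> {}" unfolding C_def by auto
      show "C (Suc n) \<subseteq> C n" unfolding C_def by (intro hull_mono image_mono) auto
      show "C n \<subseteq> cball 0 (norm m)" unfolding C_def
        using ynorm by (intro hull_minimal) (auto simp: convex_cball)
    qed
    then show ?thesis using that by blast
  qed
  have zn: "norm z \<le> norm m"
    using closure_in_closed_convex[of "cball 0 (norm m)" 0 y z] z[of 0] ynorm
    unfolding C_def by (auto simp: convex_cball)
  have zm: "m \<bullet> z \<le> m \<bullet> m - \<delta>"
  proof -
    have "closed {x. m \<bullet> x \<le> m \<bullet> m - \<delta>}" by (rule closed_halfspace_le)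
    moreover have "convex {x. m \<bullet> x \<le> m \<bullet> m - \<delta>}" by (rule convex_halfspace_le)
    moreover have "\<And>n. n \<ge> 0 \<Longrightarrow> y n \<in> {x. m \<bullet> x \<le> m \<bullet> m - \<delta>}" using yin by (simp add: inner_commute)
    ultimately have "z \<in> {x. m \<bullet> x \<le> m \<bullet> m - \<delta>}"
      using z[of 0] unfolding C_def by (rule closure_in_closed_convex)
    then show ?thesis by simp
  qed
  have zsub: "z \<in> subdiff J u0"
    unfolding subdiff_def
  proof (intro CollectI allI)
    fix v
    show "J u0 + ereal (z \<bullet> (v - u0)) \<le> J v"
    proof (cases "J v")
      case (real jv)
      have "(v - u0) \<bullet> z \<le> jv - j0 + \<eta>" if eta: "\<eta> > 0" for \<eta>
      proof -
        obtain N where N: "\<And>n. n \<ge> N \<Longrightarrow> \<bar>e n\<bar> < \<eta>"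
          using e0 eta unfolding LIMSEQ_def dist_real_def by auto
        have yK: "y n \<in> {x. (v - u0) \<bullet> x \<le> jv - j0 + \<eta>}" if "n \<ge> N" for n
        proof -
          have "ereal (j0 + y n \<bullet> (v - u0) - e n) \<le> ereal jv" using ysub[of n v] real Ju0 by simp
          then have "j0 + y n \<bullet> (v - u0) - e n \<le> jv" by simp
          then show ?thesis using N[OF that] by (simp add: inner_commute)
        qed
        show ?thesis
          using closure_in_closed_convex[of "{x. (v - u0) \<bullet> x \<le> jv - j0 + \<eta>}" N y z] z[of N] yK
          unfolding C_def by (auto simp: closed_halfspace_le convex_halfspace_le)
      qed
      then have "(v - u0) \<bullet> z \<le> jv - j0" by (rule field_le_epsilon)
      then have "j0 + z \<bullet> (v - u0) \<le> jv" by (simp add: inner_commute)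
      then show ?thesis using Ju0 real by simp
    next
      case PInf then show ?thesis by simp
    next
      case MInf then show ?thesis using J_not_minf[OF adm p1] by simp
    qed
  qed
  have "norm m \<le> norm z" using m zsub unfolding min_norm_subgrad_def by blast
  define q where "q = (1/2) *\<^sub>R (z + m)"
  have "q \<in> subdiff J u0" unfolding q_def by (rule subgrad_mid[OF zsub msub])
  then have "norm m \<le> norm q" using m unfolding min_norm_subgrad_def by blast
  then have "(norm m)^2 \<le> (norm q)^2" by (simp add: power_mono)
  moreover have "(norm q)^2 = (z \<bullet> z + 2 * (m \<bullet> z) + m \<bullet> m) / 4"
    unfolding q_def power2_norm_eq_inner
    by (simp add: inner_add_left inner_add_right inner_commute algebra_simps)
  moreover have "z \<bullet> z \<le> m \<bullet> m" using zn by (simp add: norm_le)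
  ultimately have "m \<bullet> m \<le> (m \<bullet> m + 2 * (m \<bullet> m - \<delta>) + m \<bullet> m) / 4"
    using zm by (simp add: power2_norm_eq_inner)
  then show False using dpos by simp
qed

end

locale flow =
  fixes p :: real and J :: "'a::{real_inner,complete_space} \<Rightarrow> ereal"
    and f :: 'a and u :: "real \<Rightarrow> 'a" and \<zeta> :: "real \<Rightarrow> 'a"
  assumes adm: "admissible p J" and p1: "1 \<le> p" and p2: "p < 2"
    and fH0: "f \<in> H0 J"
    and ucont: "continuous_on {0..} u" and u0: "u 0 = f"
    and zmin: "\<And>t. t > 0 \<Longrightarrow> min_norm_subgrad J (u t) (\<zeta> t)"
    and uder: "\<And>t. t > 0 \<Longrightarrow> (u has_vector_derivative - \<zeta> t) (at_right t)"
begin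

abbreviation g where "g t \<equiv> real_of_ereal (J (u t))"

lemma zsub: "t > 0 \<Longrightarrow> \<zeta> t \<in> subdiff J (u t)"
  using zmin unfolding min_norm_subgrad_def by blast

lemma Jfin: "t > 0 \<Longrightarrow> J (u t) = ereal (g t)"
  using subgrad_finite[OF adm p1 zsub] .

lemma g_nonneg: "0 \<le> g t"
  using real_J_nonneg[OF adm p1] .

lemma ucont_sub: "0 \<le> a \<Longrightarrow> continuous_on {a..b} u"
  using ucont by (rule continuous_on_subset) auto

lemma isCont_u: "t > 0 \<Longrightarrow> isCont u t"
  using ucont by (rule continuous_on_interior) (simp add: interior_real_atLeast)

lemma zeta_norm_mono:
  assumes s: "0 < s" and st: "s \<le> t"
  shows "norm (\<zeta> t) \<le> norm (\<zeta> s)"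
proof -
  have c: "norm (u t - u (t+h)) \<le> norm (u s - u (s+h))" if h: "h > 0" for h
  proof (rule contraction[OF st, where a = \<zeta> and b = "\<lambda>r. \<zeta> (r+h)"])
    show "continuous_on {s..t} u" using ucont_sub s by simp
    show "continuous_on {s..t} (\<lambda>r. u (r + h))"
      using ucont by (rule continuous_on_compose2) (use s h in \<open>auto intro!: continuous_intros\<close>)
    fix r assume r: "s < r" "r < t"
    show "(u has_vector_derivative - \<zeta> r) (at_right r)" using uder r s by simp
    show "((\<lambda>r. u (r + h)) has_vector_derivative - \<zeta> (r + h)) (at_right r)"
      using uder[of "r+h"] r s h by (intro vd_shift) simp
    show "0 \<le> (\<zeta> r - \<zeta> (r + h)) \<bullet> (u r - u (r + h))"
      using r s h by (intro subgrad_mono[OF adm p1] zsub) auto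
  qed
  have lt: "((\<lambda>h. norm ((1/h) *\<^sub>R (u (t+h) - u t))) \<longlongrightarrow> norm (- \<zeta> t)) (at_right 0)"
    using s st by (intro tendsto_norm vd_quot0 uder) simp
  have ls: "((\<lambda>h. norm ((1/h) *\<^sub>R (u (s+h) - u s))) \<longlongrightarrow> norm (- \<zeta> s)) (at_right 0)"
    using s by (intro tendsto_norm vd_quot0 uder) simp
  have "norm (- \<zeta> t) \<le> norm (- \<zeta> s)"
  proof (rule tendsto_le[OF _ ls lt])
    show "at_right (0::real) \<noteq> bot" by simp
    show "\<forall>\<^sub>F h in at_right 0. norm ((1/h) *\<^sub>R (u (t+h) - u t)) \<le> norm ((1/h) *\<^sub>R (u (s+h) - u s))"
      unfolding eventually_at_right_field
    proof (intro exI[of _ 1] conjI allI impI)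
      fix h :: real assume "0 < h" "h < 1"
      then show "norm ((1/h) *\<^sub>R (u (t+h) - u t)) \<le> norm ((1/h) *\<^sub>R (u (s+h) - u s))"
        using c[of h] by (simp add: norm_minus_commute divide_right_mono)
    qed simp
  qed
  then show ?thesis by simp
qed

lemma Kprop:
  assumes t: "t > 0" and d: "\<delta> > 0"
  shows "eventually (\<lambda>r. \<zeta> t \<bullet> \<zeta> t - \<delta> < \<zeta> r \<bullet> \<zeta> t) (at_right t)"
proof (rule ccontr)
  define m where "m = \<zeta> t"
  assume "\<not> ?thesis"
  then have ex: "\<exists>r. t < r \<and> r < b \<and> \<zeta> r \<bullet> m \<le> m \<bullet> m - \<delta>" if "b > t" for b
    using that unfolding eventually_at_right_field m_def by (meson not_le)
  have "\<exists>r. t < r \<and> r < t + 1/(real n + 1) \<and> \<zeta> r \<bullet> m \<le> m \<bullet> m - \<delta>" for n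
    by (rule ex) simp
  then obtain r where r: "\<And>n. t < r n" "\<And>n. r n < t + 1/(real n + 1)" "\<And>n. \<zeta> (r n) \<bullet> m \<le> m \<bullet> m - \<delta>"
    by metis
  have h0: "(\<lambda>n. 1/(real n + 1)) \<longlonglongrightarrow> 0"
    using LIMSEQ_inverse_real_of_nat by (simp add: inverse_eq_divide add.commute)
  have rlim: "r \<longlonglongrightarrow> t"
  proof (rule tendsto_sandwich[of "\<lambda>n. t" _ _ "\<lambda>n. t + 1/(real n + 1)"])
    show "\<forall>\<^sub>F n in sequentially. t \<le> r n" using r(1) by (intro always_eventually allI less_imp_le)
    show "\<forall>\<^sub>F n in sequentially. r n \<le> t + 1/(real n + 1)" using r(2) by (intro always_eventually allI less_imp_le)
    show "((\<lambda>n. t + 1/(real n + 1)) \<longlongrightarrow> t) sequentially" using tendsto_add[OF tendsto_const h0] by simp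
  qed simp
  define e where "e n = 2 * norm m * norm (u (r n) - u t)" for n
  have e0: "e \<longlonglongrightarrow> 0"
  proof -
    have "(\<lambda>n. u (r n)) \<longlonglongrightarrow> u t" using isCont_tendsto_compose[OF isCont_u[OF t] rlim] .
    then have "(\<lambda>n. norm (u (r n) - u t)) \<longlonglongrightarrow> 0" using tendsto_norm_zero LIM_zero by blast
    then show ?thesis unfolding e_def using tendsto_mult[OF tendsto_const[of "2 * norm m"]] by fastforce
  qed
  have rpos: "r n > 0" for n using r(1)[of n] t by simp
  have ynorm: "norm (\<zeta> (r n)) \<le> norm m" for n
    unfolding m_def using zeta_norm_mono[OF t, of "r n"] r(1)[of n] by simp
  show False
  proof (rule subgrad_closure[OF adm p1, of "u t" m "\<lambda>n. \<zeta> (r n)" e \<delta>])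
    show "min_norm_subgrad J (u t) m" unfolding m_def using zmin t .
    show "e \<longlonglongrightarrow> 0" by (rule e0)
    show "\<delta> > 0" by (rule d)
    fix n
    show "norm (\<zeta> (r n)) \<le> norm m" by (rule ynorm)
    show "\<zeta> (r n) \<bullet> m \<le> m \<bullet> m - \<delta>" by (rule r(3))
    fix v
    show "ereal (g t + \<zeta> (r n) \<bullet> (v - u t) - e n) \<le> J v"
    proof (cases "J v")
      case (real jv)
      have a: "g (r n) + \<zeta> (r n) \<bullet> (v - u (r n)) \<le> jv"
        using subgrad_ineq[OF adm p1 zsub[OF rpos] real] .
      have b: "g t + m \<bullet> (u (r n) - u t) \<le> g (r n)"
        unfolding m_def using subgrad_ineq[OF adm p1 zsub[OF t] Jfin[OF rpos]] .
      have cs: "(\<zeta> (r n) - m) \<bullet> (u (r n) - u t) \<le> e n"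
      proof -
        have "(\<zeta> (r n) - m) \<bullet> (u (r n) - u t) \<le> norm (\<zeta> (r n) - m) * norm (u (r n) - u t)"
          by (rule norm_cauchy_schwarz)
        also have "\<dots> \<le> (norm (\<zeta> (r n)) + norm m) * norm (u (r n) - u t)"
          by (intro mult_right_mono norm_triangle_ineq4) simp
        also have "\<dots> \<le> (norm m + norm m) * norm (u (r n) - u t)"
          using ynorm[of n] by (intro mult_right_mono) auto
        finally show ?thesis unfolding e_def by simp
      qed
      have "\<zeta> (r n) \<bullet> (v - u t) = \<zeta> (r n) \<bullet> (v - u (r n)) + \<zeta> (r n) \<bullet> (u (r n) - u t)"
        by (simp add: inner_diff_right)
      moreover have "(\<zeta> (r n) - m) \<bullet> (u (r n) - u t) = \<zeta> (r n) \<bullet> (u (r n) - u t) - m \<bullet> (u (r n) - u t)"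
        by (simp add: inner_diff_left)
      ultimately have "g t + \<zeta> (r n) \<bullet> (v - u t) - e n \<le> jv" using a b cs by linarith
      then show ?thesis using real by simp
    next
      case PInf then show ?thesis by simp
    next
      case MInf then show ?thesis using J_not_minf[OF adm p1] by simp
    qed
  qed
qed

end

context flow begin

lemma g_deriv:
  assumes t: "t > 0"
  shows "((\<lambda>r. g r) has_real_derivative - (\<zeta> t \<bullet> \<zeta> t)) (at_right t)"
proof -
  define m where "m = \<zeta> t"
  define Q where "Q y = (1/(y-t)) *\<^sub>R (u y - u t)" for y
  have Qlim: "(Q \<longlongrightarrow> - m) (at_right t)" unfolding Q_def m_def using vd_quot[OF uder[OF t]] .
  have zm: "((\<lambda>y. \<zeta> y \<bullet> m) \<longlongrightarrow> m \<bullet> m) (at_right t)"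
  proof (rule order_tendstoI)
    fix a assume "a < m \<bullet> m"
    then show "\<forall>\<^sub>F y in at_right t. a < \<zeta> y \<bullet> m"
      using Kprop[OF t, of "m \<bullet> m - a"] unfolding m_def by simp
  next
    fix a assume a: "m \<bullet> m < a"
    show "\<forall>\<^sub>F y in at_right t. \<zeta> y \<bullet> m < a"
      unfolding eventually_at_right_field
    proof (intro exI[of _ "t+1"] conjI allI impI)
      fix y assume y: "t < y" "y < t + 1"
      have "\<zeta> y \<bullet> m \<le> norm (\<zeta> y) * norm m" by (rule norm_cauchy_schwarz)
      also have "\<dots> \<le> norm m * norm m"
        using zeta_norm_mono[OF t, of y] y unfolding m_def by (intro mult_right_mono) auto
      also have "\<dots> = m \<bullet> m" by (metis power2_eq_square power2_norm_eq_inner)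
      finally show "\<zeta> y \<bullet> m < a" using a by simp
    qed simp
  qed
  have lo_lim: "((\<lambda>y. m \<bullet> Q y) \<longlongrightarrow> - (m \<bullet> m)) (at_right t)"
    using tendsto_inner[OF tendsto_const Qlim] by simp
  have up_lim: "((\<lambda>y. - (\<zeta> y \<bullet> m) + norm m * norm (Q y + m)) \<longlongrightarrow> - (m \<bullet> m)) (at_right t)"
  proof -
    have "((\<lambda>y. Q y + m) \<longlongrightarrow> - m + m) (at_right t)" by (intro tendsto_add Qlim tendsto_const)
    then have "((\<lambda>y. norm (Q y + m)) \<longlongrightarrow> 0) (at_right t)" using tendsto_norm by fastforce
    then have "((\<lambda>y. - (\<zeta> y \<bullet> m) + norm m * norm (Q y + m)) \<longlongrightarrow> - (m \<bullet> m) + norm m * 0) (at_right t)"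
      by (intro tendsto_add tendsto_minus zm tendsto_mult tendsto_const)
    then show ?thesis by simp
  qed
  have "((\<lambda>y. (g y - g t) / (y - t)) \<longlongrightarrow> - (m \<bullet> m)) (at_right t)"
  proof (rule tendsto_sandwich[OF _ _ lo_lim up_lim])
    show "\<forall>\<^sub>F y in at_right t. m \<bullet> Q y \<le> (g y - g t) / (y - t)"
      unfolding eventually_at_right_field
    proof (intro exI[of _ "t+1"] conjI allI impI)
      fix y assume y: "t < y" "y < t + 1"
      have "g t + m \<bullet> (u y - u t) \<le> g y"
        unfolding m_def using subgrad_ineq[OF adm p1 zsub[OF t] Jfin, of y] y t by simp
      then have "m \<bullet> (u y - u t) / (y - t) \<le> (g y - g t) / (y - t)"
        using y by (intro divide_right_mono) auto
      then show "m \<bullet> Q y \<le> (g y - g t) / (y - t)" unfolding Q_def by simp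
    qed simp
    show "\<forall>\<^sub>F y in at_right t. (g y - g t) / (y - t) \<le> - (\<zeta> y \<bullet> m) + norm m * norm (Q y + m)"
      unfolding eventually_at_right_field
    proof (intro exI[of _ "t+1"] conjI allI impI)
      fix y assume y: "t < y" "y < t + 1"
      have ypos: "y > 0" using y t by simp
      have "g y + \<zeta> y \<bullet> (u t - u y) \<le> g t"
        using subgrad_ineq[OF adm p1 zsub[OF ypos] Jfin[OF t]] .
      then have "g y - g t \<le> \<zeta> y \<bullet> (u y - u t)" by (simp add: inner_diff_right)
      then have "(g y - g t) / (y - t) \<le> \<zeta> y \<bullet> (u y - u t) / (y - t)"
        using y by (intro divide_right_mono) auto
      also have "\<dots> = \<zeta> y \<bullet> Q y" unfolding Q_def by simp
      also have "\<dots> = \<zeta> y \<bullet> (Q y + m) - \<zeta> y \<bullet> m" by (simp add: inner_add_right)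
      also have "\<dots> \<le> norm (\<zeta> y) * norm (Q y + m) - \<zeta> y \<bullet> m"
        using norm_cauchy_schwarz[of "\<zeta> y" "Q y + m"] by simp
      also have "\<dots> \<le> norm m * norm (Q y + m) - \<zeta> y \<bullet> m"
        using zeta_norm_mono[OF t, of y] y unfolding m_def by (simp add: mult_right_mono)
      finally show "(g y - g t) / (y - t) \<le> - (\<zeta> y \<bullet> m) + norm m * norm (Q y + m)" by simp
    qed simp
  qed
  then show ?thesis unfolding m_def by (simp add: has_field_derivative_iff)
qed

lemma g_lip:
  assumes a: "0 < a" and r: "a \<le> r" and s: "a \<le> s"
  shows "\<bar>g r - g s\<bar> \<le> norm (\<zeta> a) * norm (u r - u s)"
proof -
  have rp: "r > 0" and sp: "s > 0" using a r s by auto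
  have "g r + \<zeta> r \<bullet> (u s - u r) \<le> g s" using subgrad_ineq[OF adm p1 zsub[OF rp] Jfin[OF sp]] .
  then have 1: "g r - g s \<le> \<zeta> r \<bullet> (u r - u s)" by (simp add: inner_diff_right)
  have "g s + \<zeta> s \<bullet> (u r - u s) \<le> g r" using subgrad_ineq[OF adm p1 zsub[OF sp] Jfin[OF rp]] .
  then have 2: "g s - g r \<le> \<zeta> s \<bullet> (u s - u r)" by (simp add: inner_diff_right)
  have "\<zeta> r \<bullet> (u r - u s) \<le> norm (\<zeta> r) * norm (u r - u s)" by (rule norm_cauchy_schwarz)
  also have "\<dots> \<le> norm (\<zeta> a) * norm (u r - u s)"
    using zeta_norm_mono[OF a r] by (simp add: mult_right_mono)
  finally have 3: "\<zeta> r \<bullet> (u r - u s) \<le> norm (\<zeta> a) * norm (u r - u s)" .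
  have "\<zeta> s \<bullet> (u s - u r) \<le> norm (\<zeta> s) * norm (u s - u r)" by (rule norm_cauchy_schwarz)
  also have "\<dots> \<le> norm (\<zeta> a) * norm (u r - u s)"
    using zeta_norm_mono[OF a s] by (simp add: mult_right_mono norm_minus_commute)
  finally have 4: "\<zeta> s \<bullet> (u s - u r) \<le> norm (\<zeta> a) * norm (u r - u s)" .
  show ?thesis using 1 2 3 4 by linarith
qed

lemma g_cont:
  assumes a: "0 < a"
  shows "continuous_on {a..b} (\<lambda>r. g r)"
  unfolding continuous_on_def
proof
  fix x assume x: "x \<in> {a..b}"
  have ul: "(u \<longlongrightarrow> u x) (at x within {a..b})"
    using ucont_sub[of a b] a x unfolding continuous_on_def by auto
  then have "((\<lambda>r. norm (\<zeta> a) * norm (u r - u x)) \<longlongrightarrow> norm (\<zeta> a) * norm (u x - u x)) (at x within {a..b})"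
    by (intro tendsto_intros)
  then have "((\<lambda>r. norm (\<zeta> a) * norm (u r - u x)) \<longlongrightarrow> 0) (at x within {a..b})" by simp
  then have "((\<lambda>r. g r - g x) \<longlongrightarrow> 0) (at x within {a..b})"
  proof (rule Lim_null_comparison[rotated])
    show "\<forall>\<^sub>F r in at x within {a..b}. norm (g r - g x) \<le> norm (\<zeta> a) * norm (u r - u x)"
      unfolding eventually_at_filter
      by (intro always_eventually allI impI) (use x g_lip[OF a] in \<open>auto simp: real_norm_def\<close>)
  qed
  then show "((\<lambda>r. g r) \<longlongrightarrow> g x) (at x within {a..b})" by (rule LIM_zero_cancel)
qed

lemma N_deriv:
  assumes t: "t > 0"
  shows "((\<lambda>r. u r \<bullet> u r) has_real_derivative - (2 * p * g t)) (at_right t)"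
proof -
  have "((\<lambda>r. u r \<bullet> u r) has_real_derivative (u t \<bullet> - \<zeta> t + - \<zeta> t \<bullet> u t)) (at_right t)"
    using vd_inner[OF uder[OF t] uder[OF t]] .
  moreover have "u t \<bullet> - \<zeta> t + - \<zeta> t \<bullet> u t = - (2 * p * g t)"
    using euler[OF adm p1 zsub[OF t]] by (simp add: inner_commute)
  ultimately show ?thesis by simp
qed

lemma norm_mono:
  assumes s: "0 \<le> s" and st: "s \<le> t"
  shows "norm (u t) \<le> norm (u s)"
proof -
  have "u t \<bullet> u t \<le> u s \<bullet> u s"
  proof (rule decr_deriv[OF st, where f' = "\<lambda>r. - (2 * p * g r)"])
    show "continuous_on {s..t} (\<lambda>r. u r \<bullet> u r)" using ucont_sub[OF s] by (intro continuous_intros)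
    fix r assume r: "s < r" "r < t"
    then show "((\<lambda>r. u r \<bullet> u r) has_real_derivative - (2 * p * g r)) (at_right r)"
      using s by (intro N_deriv) simp
    show "- (2 * p * g r) \<le> 0" using g_nonneg[of r] p1 by simp
  qed
  then show ?thesis by (simp add: norm_le)
qed

lemma u_orth:
  assumes t: "0 \<le> t"
  shows "u t \<in> orthogonal_comp (null_set J)"
  unfolding orthogonal_comp_def
proof (intro CollectI ballI)
  fix n assume n: "n \<in> null_set J"
  then have Jn: "J n = 0" unfolding null_set_def by simp
  have der: "((\<lambda>r. u r \<bullet> n) has_real_derivative 0) (at_right r)" if "r > 0" for r
  proof -
    have "((\<lambda>r. u r \<bullet> n) has_real_derivative (u r \<bullet> 0 + - \<zeta> r \<bullet> n)) (at_right r)"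
      by (rule vd_inner[OF uder[OF that]]) (rule has_vector_derivative_const)
    then show ?thesis using subgrad_orth[OF adm p1 zsub[OF that] Jn] by simp
  qed
  have cu: "continuous_on {0..t} u" using ucont_sub[of 0 t] by simp
  have c: "continuous_on {0..t} (\<lambda>r. u r \<bullet> n)" using cu by (intro continuous_intros)
  have "u t \<bullet> n \<le> u 0 \<bullet> n"
    by (rule decr_deriv[OF t c, where f' = "\<lambda>r. 0"]) (auto intro: der)
  moreover have "- (u t \<bullet> n) \<le> - (u 0 \<bullet> n)"
  proof (rule decr_deriv[OF t, where f' = "\<lambda>r. - 0"])
    show "continuous_on {0..t} (\<lambda>r. - (u r \<bullet> n))" by (rule continuous_on_minus[OF c])
  qed (use DERIV_minus[OF der] in auto)
  moreover have "f \<bullet> n = 0"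
    using fH0 n unfolding H0_def orthogonal_comp_def orthogonal_def by (auto simp: inner_commute)
  ultimately show "orthogonal n (u t)" unfolding orthogonal_def using u0 by (simp add: inner_commute)
qed

end

lemma norm_powr_inner:
  fixes x :: "'a::real_inner"
  shows "norm x powr q = (x \<bullet> x) powr (q/2)"
proof -
  have "norm x = (x \<bullet> x) powr (1/2)" by (simp add: norm_eq_sqrt_inner powr_half_sqrt)
  then have "norm x powr q = ((x \<bullet> x) powr (1/2)) powr q" by simp
  also have "\<dots> = (x \<bullet> x) powr (q/2)" by (simp add: powr_powr)
  finally show ?thesis .
qed

lemma rayleigh_eq:
  fixes x :: "'a::real_normed_vector"
  assumes "x \<noteq> 0" "J x = ereal j"
  shows "rayleigh p J x = ereal (p * j / norm x powr p)"
  using assms unfolding rayleigh_def by (simp add: divide_ereal_def divide_inverse)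

lemma lam_le_ray: "x \<in> H0 J \<Longrightarrow> lambda1 p J \<le> rayleigh p J x"
  unfolding lambda1_def by (rule INF_lower)

context flow begin

abbreviation N where "N t \<equiv> u t \<bullet> u t"
abbreviation Lam where "Lam t \<equiv> p * (g t * (N t) powr (- p / 2))"
abbreviation phi where "phi t \<equiv> (N t) powr ((2 - p) / 2)"

lemma f_ne: "f \<noteq> 0" using fH0 unfolding H0_def by simp

lemma N_pos: "u t \<noteq> 0 \<Longrightarrow> N t > 0" by simp

lemma uH0: "0 \<le> t \<Longrightarrow> u t \<noteq> 0 \<Longrightarrow> u t \<in> H0 J"
  using u_orth unfolding H0_def by simp

lemma ray_Lam:
  assumes t: "t > 0" and ne: "u t \<noteq> 0"
  shows "rayleigh p J (u t) = ereal (Lam t)"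
proof -
  have "rayleigh p J (u t) = ereal (p * g t / norm (u t) powr p)"
    by (rule rayleigh_eq[where x="u t" and J=J and j="g t"]) (use ne Jfin[OF t] in auto)
  also have "p * g t / norm (u t) powr p = Lam t"
    unfolding norm_powr_inner by (simp add: powr_minus_divide)
  finally show ?thesis .
qed

lemma zero_stays: "0 \<le> s \<Longrightarrow> s \<le> t \<Longrightarrow> u s = 0 \<Longrightarrow> u t = 0"
  using norm_mono[of s t] by simp

lemma Lam_deriv:
  assumes t: "t > 0" and ne: "u t \<noteq> 0"
  shows "\<exists>D. (Lam has_real_derivative D) (at_right t) \<and> D \<le> 0"
proof -
  have Np: "N t > 0" using ne by simp
  have d1: "((\<lambda>x. x powr (- p / 2)) has_real_derivative (- p / 2) * N t powr (- p / 2 - 1)) (at (N t))"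
    using has_real_derivative_powr[OF Np] .
  have d2: "((\<lambda>r. N r powr (- p / 2)) has_real_derivative
      ((- p / 2) * N t powr (- p / 2 - 1)) * (- (2 * p * g t))) (at_right t)"
    using DERIV_chain[OF d1 N_deriv[OF t]] by (simp add: o_def)
  have d3: "(Lam has_real_derivative
      p * (- (\<zeta> t \<bullet> \<zeta> t) * N t powr (- p / 2) + (((- p / 2) * N t powr (- p / 2 - 1)) * (- (2 * p * g t))) * g t)) (at_right t)"
    by (rule DERIV_cmult[OF DERIV_mult[OF g_deriv[OF t] d2]])
  have split: "N t powr (- p / 2) = N t * N t powr (- p / 2 - 1)"
  proof -
    have "N t * N t powr (- p/2 - 1) = N t powr 1 * N t powr (- p/2 - 1)" using Np by simp
    also have "\<dots> = N t powr (1 + (- p/2 - 1))" by (rule powr_add[symmetric])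
    finally show ?thesis by simp
  qed
  have cs: "(p * g t)^2 \<le> (\<zeta> t \<bullet> \<zeta> t) * N t"
    using Cauchy_Schwarz_ineq[of "\<zeta> t" "u t"] euler[OF adm p1 zsub[OF t]] by simp
  have pos: "N t powr (- p / 2 - 1) > 0" using Np by simp
  have "- (\<zeta> t \<bullet> \<zeta> t) * N t powr (- p / 2) + (((- p / 2) * N t powr (- p / 2 - 1)) * (- (2 * p * g t))) * g t
      = N t powr (- p / 2 - 1) * ((p * g t)^2 - (\<zeta> t \<bullet> \<zeta> t) * N t)"
    unfolding split by (simp add: algebra_simps power2_eq_square)
  also have "\<dots> \<le> 0" using cs pos by (simp add: mult_nonneg_nonpos)
  finally have "p * (- (\<zeta> t \<bullet> \<zeta> t) * N t powr (- p / 2) + (((- p / 2) * N t powr (- p / 2 - 1)) * (- (2 * p * g t))) * g t) \<le> 0"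
    using p1 by (simp add: mult_nonneg_nonpos)
  then show ?thesis using d3 by blast
qed

lemma phi_deriv:
  assumes t: "t > 0" and ne: "u t \<noteq> 0"
  shows "(phi has_real_derivative - (2 - p) * Lam t) (at_right t)"
proof -
  have Np: "N t > 0" using ne by simp
  have d1: "((\<lambda>x. x powr ((2 - p) / 2)) has_real_derivative ((2 - p) / 2) * N t powr ((2 - p) / 2 - 1)) (at (N t))"
    using has_real_derivative_powr[OF Np] .
  have d: "(phi has_real_derivative ((2 - p) / 2) * N t powr ((2 - p) / 2 - 1) * (- (2 * p * g t))) (at_right t)"
    using DERIV_chain[OF d1 N_deriv[OF t]] by (simp add: o_def)
  have e: "(2 - p) / 2 - 1 = - p / 2" by (simp add: field_simps)
  have "((2 - p) / 2) * N t powr ((2 - p) / 2 - 1) * (- (2 * p * g t)) = - (2 - p) * Lam t"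
    unfolding e by (simp add: field_simps)
  then show ?thesis using d by simp
qed

lemma Lam_cont:
  assumes a: "0 < a" and ne: "\<And>r. r \<in> {a..b} \<Longrightarrow> u r \<noteq> 0"
  shows "continuous_on {a..b} Lam"
proof -
  have cu: "continuous_on {a..b} u" using ucont_sub a by simp
  have cN: "continuous_on {a..b} N" using cu by (intro continuous_intros)
  have "\<forall>x\<in>{a..b}. N x \<noteq> 0" using ne by (auto simp: inner_eq_zero_iff)
  then have "continuous_on {a..b} (\<lambda>r. N r powr (- p / 2))"
    using cN by (intro continuous_on_powr continuous_on_const)
  then show ?thesis using g_cont[OF a] by (intro continuous_on_mult continuous_on_const)
qed

lemma phi_cont:
  assumes a: "0 \<le> a"
  shows "continuous_on {a..b} phi"
proof -
  have cu: "continuous_on {a..b} u" using ucont_sub a by simp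
  have cN: "continuous_on {a..b} N" using cu by (intro continuous_intros)
  show ?thesis using cN p2 by (intro continuous_on_powr' continuous_on_const) auto
qed

lemma Lam_mono:
  assumes s: "0 < s" and st: "s \<le> t" and ne: "u t \<noteq> 0"
  shows "Lam t \<le> Lam s"
proof -
  have ner: "u r \<noteq> 0" if "r \<le> t" "0 \<le> r" for r using zero_stays[of r t] that ne by blast
  show ?thesis
  proof (rule decr_dini_open[OF st Lam_cont[OF s]])
    show "\<And>r. r \<in> {s..t} \<Longrightarrow> u r \<noteq> 0" using ner s by auto
    fix x e :: real assume x: "s < x" "x < t" and e: "0 < e"
    obtain D where "(Lam has_real_derivative D) (at_right x)" "D \<le> 0"
      using Lam_deriv[of x] ner[of x] x s by auto
    then show "\<exists>d>0. \<forall>h. 0 < h \<and> h < d \<longrightarrow> Lam (x + h) \<le> Lam x + e * h"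
      using deriv_dini e by blast
  qed
qed

end

locale flowc = flow +
  assumes coer: "lambda1 p J > 0"
begin

lemma small_nonzero: "\<exists>t0>0. u t0 \<noteq> 0"
proof -
  have "isCont u 0 \<or> True" by simp
  have "continuous (at 0 within {0..}) u" using ucont by (simp add: continuous_on_eq_continuous_within)
  then have "((\<lambda>t. u t) \<longlongrightarrow> f) (at_right 0)"
    using u0 by (simp add: continuous_within at_within_Ici_at_right)
  then have "eventually (\<lambda>t. dist (u t) f < norm f) (at_right 0)"
    using f_ne by (intro tendstoD) auto
  then obtain b where b: "b > 0" "\<And>t. 0 < t \<Longrightarrow> t < b \<Longrightarrow> dist (u t) f < norm f"
    unfolding eventually_at_right_field by auto
  have "u (b/2) \<noteq> 0" using b(2)[of "b/2"] b(1) by auto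
  then show ?thesis using b(1) by (intro exI[of _ "b/2"]) auto
qed

lemma L1_ex: "\<exists>L1. lambda1 p J = ereal L1 \<and> 0 < L1"
proof -
  obtain t0 where t0: "t0 > 0" "u t0 \<noteq> 0" using small_nonzero by blast
  have "lambda1 p J \<le> ereal (Lam t0)"
    using lam_le_ray[OF uH0[of t0], where p=p] ray_Lam[OF t0] t0 by simp
  then show ?thesis using coer by (cases "lambda1 p J") auto
qed

definition L1 where "L1 = (SOME L. lambda1 p J = ereal L \<and> 0 < L)"

lemma L1: "lambda1 p J = ereal L1" "0 < L1"
  using someI_ex[OF L1_ex] unfolding L1_def by auto

lemma Lam_ge: "t > 0 \<Longrightarrow> u t \<noteq> 0 \<Longrightarrow> L1 \<le> Lam t"
  using lam_le_ray[OF uH0[of t], where p=p] ray_Lam[of t] L1 by simp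

lemma exists_zero: "\<exists>t0>0. u t0 = 0"
proof (rule ccontr)
  assume "\<not> ?thesis"
  then have ne: "\<And>t. t > 0 \<Longrightarrow> u t \<noteq> 0" by auto
  define t where "t = 2 + phi 1 / ((2 - p) * L1)"
  have t1: "1 \<le> t" using L1 p2 unfolding t_def by (simp add: divide_nonneg_pos)
  have "phi t + (2 - p) * L1 * t \<le> phi 1 + (2 - p) * L1 * 1"
  proof (rule decr_deriv[OF t1, where f' = "\<lambda>r. - (2 - p) * Lam r + (2 - p) * L1"])
    have "continuous_on {1..t} (\<lambda>r. (2 - p) * L1 * r)" by (intro continuous_intros)
    then show "continuous_on {1..t} (\<lambda>r. phi r + (2 - p) * L1 * r)"
      using phi_cont[of 1 t] by (intro continuous_on_add) auto
    fix r assume r: "1 < r" "r < t"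
    have "((\<lambda>r. phi r + (2 - p) * L1 * r) has_real_derivative - (2 - p) * Lam r + (2 - p) * L1 * 1) (at_right r)"
      using r ne[of r] by (intro DERIV_add phi_deriv DERIV_cmult DERIV_ident) auto
    then show "((\<lambda>r. phi r + (2 - p) * L1 * r) has_real_derivative - (2 - p) * Lam r + (2 - p) * L1) (at_right r)"
      by simp
    have "(2 - p) * L1 \<le> (2 - p) * Lam r" using Lam_ge[of r] ne[of r] r p2 by (intro mult_left_mono) auto
    then show "- (2 - p) * Lam r + (2 - p) * L1 \<le> 0" by linarith
  qed
  moreover have "(2 - p) * L1 * t = 2 * (2 - p) * L1 + phi 1"
    unfolding t_def using L1 p2 by (simp add: field_simps)
  moreover have "phi t \<ge> 0" by (rule powr_ge_zero)
  moreover have "(2 - p) * L1 > 0" using L1 p2 by simp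
  ultimately show False by linarith
qed

end

context flowc begin

abbreviation T where "T \<equiv> extinction_time u"

definition Eset where "Eset = {T. T > 0 \<and> (\<forall>t\<ge>T. u t = 0)}"

lemma T_def': "T = Inf Eset" unfolding extinction_time_def Eset_def ..

lemma E_ne: "Eset \<noteq> {}"
proof -
  obtain t0 where t0: "t0 > 0" "u t0 = 0" using exists_zero by blast
  then have "t0 \<in> Eset" unfolding Eset_def using zero_stays[of t0] by auto
  then show ?thesis by blast
qed

lemma E_bdd: "bdd_below Eset" unfolding Eset_def by (rule bdd_belowI[of _ 0]) auto

lemma T_ge0: "0 \<le> T"
  unfolding T_def' using E_ne by (intro cInf_greatest) (auto simp: Eset_def)

lemma after_T: "t > T \<Longrightarrow> u t = 0"
proof -
  assume "t > T"
  then obtain x where "x \<in> Eset" "x < t" using cInf_lessD[OF E_ne, of t] unfolding T_def' by auto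
  then show "u t = 0" unfolding Eset_def by auto
qed

lemma u_T: "u T = 0"
proof -
  define x where "x n = T + 1/(real n + 1)" for n
  have h0: "(\<lambda>n. 1/(real n + 1)) \<longlonglongrightarrow> 0"
    using LIMSEQ_inverse_real_of_nat by (simp add: inverse_eq_divide add.commute)
  have xl: "x \<longlonglongrightarrow> T" unfolding x_def using tendsto_add[OF tendsto_const h0, of T] by simp
  have xin: "\<forall>n. x n \<in> {0..}" unfolding x_def using T_ge0 by (auto intro: add_nonneg_nonneg)
  have "(u \<circ> x) \<longlonglongrightarrow> u T"
    using ucont T_ge0 xin xl unfolding continuous_on_sequentially by auto
  moreover have "(u \<circ> x) = (\<lambda>n. 0)"
    unfolding x_def o_def by (intro ext after_T) simp
  ultimately show ?thesis using LIMSEQ_unique tendsto_const by metis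
qed

lemma after_T': "t \<ge> T \<Longrightarrow> u t = 0"
  using after_T u_T by (cases "t = T") auto

lemma T_pos: "T > 0"
proof (rule ccontr)
  assume "\<not> T > 0"
  then have "T = 0" using T_ge0 by simp
  then show False using u_T u0 f_ne by simp
qed

lemma before_T: "0 \<le> t \<Longrightarrow> t < T \<Longrightarrow> u t \<noteq> 0"
proof
  assume t: "0 \<le> t" "t < T" and z: "u t = 0"
  show False
  proof (cases "t = 0")
    case True then show False using z u0 f_ne by simp
  next
    case False
    then have "t \<in> Eset" unfolding Eset_def using t z zero_stays[of t] by auto
    then have "T \<le> t" unfolding T_def' using E_bdd by (rule cInf_lower)
    then show False using t by simp
  qed
qed

definition Linf where "Linf = Inf (Lam ` {0<..<T})"

lemma Lam_bdd: "bdd_below (Lam ` {0<..<T})"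
  using Lam_ge before_T by (intro bdd_belowI[of _ L1]) auto

lemma Linf_le: "0 < t \<Longrightarrow> t < T \<Longrightarrow> Linf \<le> Lam t"
  unfolding Linf_def using Lam_bdd by (intro cInf_lower) auto

lemma L1_le_Linf: "L1 \<le> Linf"
proof -
  have "{0<..<T} \<noteq> {}" using T_pos by (auto intro!: exI[of _ "T/2"])
  then show ?thesis unfolding Linf_def using Lam_ge before_T by (intro cInf_greatest) auto
qed

lemma Lam_tendsto: "(Lam \<longlongrightarrow> Linf) (at_left T)"
proof (rule order_tendstoI)
  fix a assume a: "a < Linf"
  show "\<forall>\<^sub>F x in at_left T. a < Lam x"
    unfolding eventually_at_left_field
    using T_pos a Linf_le by (intro exI[of _ 0]) (auto intro: less_le_trans)
next
  fix a assume a: "Linf < a"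
  have ne: "Lam ` {0<..<T} \<noteq> {}" using T_pos by (auto intro!: exI[of _ "T/2"])
  obtain s where s: "s \<in> {0<..<T}" "Lam s < a"
    using cInf_lessD[OF ne, of a] a unfolding Linf_def by auto
  show "\<forall>\<^sub>F x in at_left T. Lam x < a"
    unfolding eventually_at_left_field
  proof (intro exI[of _ s] conjI allI impI)
    show "s < T" using s by simp
    fix y assume y: "s < y" "y < T"
    then have "Lam y \<le> Lam s" using s before_T[of y] by (intro Lam_mono) auto
    then show "Lam y < a" using s by simp
  qed
qed

lemma phi_T: "phi T = 0" using u_T by simp

lemma phi_lower:
  assumes t: "0 < t" "t < T"
  shows "(2 - p) * Linf * (T - t) \<le> phi t"
proof -
  have "phi T + (2 - p) * Linf * T \<le> phi t + (2 - p) * Linf * t"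
  proof (rule decr_deriv[where a=t and b=T and f="\<lambda>r. phi r + (2 - p) * Linf * r" and f' = "\<lambda>r. - (2 - p) * Lam r + (2 - p) * Linf"])
    show "t \<le> T" using t by simp
    have "continuous_on {t..T} (\<lambda>r. (2 - p) * Linf * r)" by (intro continuous_intros)
    then show "continuous_on {t..T} (\<lambda>r. phi r + (2 - p) * Linf * r)"
      using phi_cont[of t T] t by (intro continuous_on_add) auto
    fix r assume r: "t < r" "r < T"
    have ne: "u r \<noteq> 0" using before_T[of r] r t by simp
    have "((\<lambda>r. phi r + (2 - p) * Linf * r) has_real_derivative - (2 - p) * Lam r + (2 - p) * Linf * 1) (at_right r)"
      using r t ne by (intro DERIV_add phi_deriv DERIV_cmult DERIV_ident) auto
    then show "((\<lambda>r. phi r + (2 - p) * Linf * r) has_real_derivative - (2 - p) * Lam r + (2 - p) * Linf) (at_right r)"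
      by simp
    have "(2 - p) * Linf \<le> (2 - p) * Lam r" using Linf_le[of r] r t p2 by (intro mult_left_mono) auto
    then show "- (2 - p) * Lam r + (2 - p) * Linf \<le> 0" by linarith
  qed
  then show ?thesis using phi_T by (simp add: algebra_simps)
qed

lemma phi_upper:
  assumes t: "0 < t" "t < T"
  shows "phi t \<le> (2 - p) * Lam t * (T - t)"
proof -
  have "- phi T - (2 - p) * Lam t * T \<le> - phi t - (2 - p) * Lam t * t"
  proof (rule decr_deriv[where a=t and b=T and f="\<lambda>r. - phi r - (2 - p) * Lam t * r" and f' = "\<lambda>r. (2 - p) * Lam r - (2 - p) * Lam t"])
    show "t \<le> T" using t by simp
    have "continuous_on {t..T} (\<lambda>r. (2 - p) * Lam t * r)" by (intro continuous_intros)
    then show "continuous_on {t..T} (\<lambda>r. - phi r - (2 - p) * Lam t * r)"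
      using phi_cont[of t T] t by (intro continuous_on_diff continuous_on_minus) auto
    fix r assume r: "t < r" "r < T"
    have ne: "u r \<noteq> 0" using before_T[of r] r t by simp
    have "((\<lambda>r. - phi r - (2 - p) * Lam t * r) has_real_derivative - (- (2 - p) * Lam r) - (2 - p) * Lam t * 1) (at_right r)"
      using r t ne by (intro DERIV_diff DERIV_minus phi_deriv DERIV_cmult DERIV_ident) auto
    moreover have "- (- (2 - p) * Lam r) - (2 - p) * Lam t * 1 = (2 - p) * Lam r - (2 - p) * Lam t" by (simp add: algebra_simps)
    ultimately show "((\<lambda>r. - phi r - (2 - p) * Lam t * r) has_real_derivative (2 - p) * Lam r - (2 - p) * Lam t) (at_right r)"
      by (simp only:)
    have lm: "Lam r \<le> Lam t" using r t ne by (intro Lam_mono) auto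
    have "0 \<le> 2 - p" using p2 by simp
    from mult_left_mono[OF lm this] have "(2 - p) * Lam r \<le> (2 - p) * Lam t" .
    then show "(2 - p) * Lam r - (2 - p) * Lam t \<le> 0" by linarith
  qed
  then show ?thesis using phi_T by (simp add: algebra_simps)
qed

end

lemma powr_tangent:
  fixes p r \<rho> :: real
  assumes p: "1 \<le> p" and r: "0 \<le> r" and rho: "0 < \<rho>"
  shows "\<rho> powr p + p * \<rho> powr (p - 1) * (r - \<rho>) \<le> r powr p"
proof -
  define c where "c = p * \<rho> powr (p - 1)"
  define h where "h x = x powr p - c * x" for x
  have hder: "(h has_real_derivative p * x powr (p - 1) - c) (at_right x)" if "x > 0" for x
  proof -
    have "((\<lambda>x. x powr p) has_real_derivative p * x powr (p - 1)) (at x)"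
      using has_real_derivative_powr[OF that] .
    then have "(h has_real_derivative p * x powr (p - 1) - c * 1) (at x)"
      unfolding h_def by (intro DERIV_diff DERIV_cmult DERIV_ident)
    then show ?thesis by (simp add: has_field_derivative_at_within)
  qed
  have hcont: "continuous_on {a..b} h" if "0 \<le> a" for a b
  proof -
    have "continuous_on {a..b} (\<lambda>x. x powr p)"
      using that p by (intro continuous_on_powr' continuous_on_id continuous_on_const) auto
    then show ?thesis unfolding h_def by (rule continuous_on_diff) (intro continuous_intros)
  qed
  have hrho: "h \<rho> = \<rho> powr p - p * \<rho> powr p"
  proof -
    have "\<rho> powr (p - 1) * \<rho> = \<rho> powr p"
      using rho by (simp add: powr_diff)
    then show ?thesis unfolding h_def c_def by (simp add: mult.assoc)
  qed
  have "h \<rho> \<le> h r"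
  proof (cases "\<rho> \<le> r")
    case True
    have "- h r \<le> - h \<rho>"
    proof (rule decr_deriv[where a=\<rho> and b=r and f="\<lambda>x. - h x" and f'="\<lambda>x. - (p * x powr (p - 1) - c)"])
      show "\<rho> \<le> r" by (rule True)
      show "continuous_on {\<rho>..r} (\<lambda>x. - h x)" using hcont[of \<rho> r] rho by (intro continuous_on_minus) auto
      fix x assume x: "\<rho> < x" "x < r"
      show "((\<lambda>x. - h x) has_real_derivative - (p * x powr (p - 1) - c)) (at_right x)"
        using x rho by (intro DERIV_minus hder) auto
      have "\<rho> powr (p - 1) \<le> x powr (p - 1)" using x rho p by (intro powr_mono2) auto
      then show "- (p * x powr (p - 1) - c) \<le> 0" unfolding c_def using p by (simp add: mult_left_mono)
    qed
    then show ?thesis by simp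
  next
    case False
    show ?thesis
    proof (rule decr_deriv[where a=r and b=\<rho> and f=h and f'="\<lambda>x. p * x powr (p - 1) - c"])
      show "r \<le> \<rho>" using False by simp
      show "continuous_on {r..\<rho>} h" using hcont[OF r] .
      fix x assume x: "r < x" "x < \<rho>"
      show "(h has_real_derivative p * x powr (p - 1) - c) (at_right x)"
        using x r by (intro hder) auto
      have "x powr (p - 1) \<le> \<rho> powr (p - 1)" using x r p by (intro powr_mono2) auto
      then show "p * x powr (p - 1) - c \<le> 0" unfolding c_def using p by (simp add: mult_left_mono)
    qed
  qed
  then have "\<rho> powr p - p * \<rho> powr p \<le> r powr p - c * r" unfolding hrho by (simp add: h_def)
  moreover have "p * \<rho> powr (p - 1) * (r - \<rho>) = c * r - p * \<rho> powr p"
  proof -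
    have "\<rho> powr (p - 1) * \<rho> = \<rho> powr p" using rho by (simp add: powr_diff)
    then show ?thesis unfolding c_def by (simp add: algebra_simps)
  qed
  ultimately show ?thesis by simp
qed

lemma lsc_seq:
  fixes J :: "'a::topological_space \<Rightarrow> ereal"
  assumes lsc: "lower_semicont J" and X: "X \<longlonglongrightarrow> x" and JX: "((\<lambda>n. J (X n)) \<longlongrightarrow> c) sequentially"
  shows "J x \<le> c"
proof (rule ccontr)
  assume "\<not> J x \<le> c"
  then have "c < J x" by simp
  then obtain y where y: "c < y" "y < J x" using dense by blast
  have "y < Liminf (at x) J" using y lsc unfolding lower_semicont_def by (meson order.strict_trans2)
  then have "eventually (\<lambda>z. y < J z) (at x)" by (rule less_LiminfD)
  then have "eventually (\<lambda>z. z \<noteq> x \<longrightarrow> z \<in> UNIV \<longrightarrow> y < J z) (nhds x)"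
    unfolding eventually_at_filter .
  then have "eventually (\<lambda>z. y < J z) (nhds x)"
    by (rule eventually_mono) (use y in auto)
  then have e1: "eventually (\<lambda>n. y < J (X n)) sequentially"
    using X unfolding filterlim_iff by blast
  have e2: "eventually (\<lambda>n. J (X n) < y) sequentially"
    using JX y(1) by (rule order_tendstoD(2))
  have "eventually (\<lambda>n. False) sequentially"
    using eventually_conj[OF e1 e2] by (rule eventually_mono) auto
  then show False by simp
qed

locale profile = flowc +
  fixes tk :: "nat \<Rightarrow> real" and ws :: 'a
  assumes tk_mono: "strict_mono tk"
    and tk_range: "\<And>k. 0 \<le> tk k \<and> tk k < extinction_time u"
    and tk_lim: "tk \<longlonglongrightarrow> extinction_time u"
    and w_lim: "(\<lambda>k. (1 / (1 - tk k / extinction_time u) powr (1 / (2 - p))) *\<^sub>R u (tk k)) \<longlonglongrightarrow> ws"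
begin

definition A where "A k = (1 - tk k / T) powr (1 / (2 - p))" for k
definition w where "w k = (1 / A k) *\<^sub>R u (tk k)" for k
abbreviation W where "W \<equiv> norm ws"

lemma w_lim': "w \<longlonglongrightarrow> ws" using w_lim unfolding w_def A_def .

lemma tk_pos: "1 \<le> k \<Longrightarrow> 0 < tk k"
proof -
  assume "1 \<le> k"
  then have "tk 0 < tk k" using strict_monoD[OF tk_mono, of 0 k] by simp
  then show ?thesis using tk_range[of 0] by simp
qed

lemma tk_lt: "tk k < T" using tk_range by simp

lemma frac_pos: "0 < 1 - tk k / T"
proof -
  have "tk k / T < 1" using tk_lt[of k] T_pos by (simp add: divide_less_eq_1)
  then show ?thesis by simp
qed

lemma A_pos: "0 < A k" unfolding A_def using frac_pos[of k] by (metis powr_gt_zero less_irrefl)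

lemma A_pow: "A k powr (2 - p) = 1 - tk k / T"
proof -
  have e: "1 / (2 - p) * (2 - p) = 1" using p2 by simp
  have "A k powr (2 - p) = (1 - tk k / T) powr (1 / (2 - p) * (2 - p))"
    unfolding A_def by (rule powr_powr)
  then show ?thesis unfolding e using frac_pos[of k] by simp
qed

lemma u_eq: "u (tk k) = A k *\<^sub>R w k"
  unfolding w_def using A_pos[of k] by simp

lemma wnorm: "norm (w k) powr (2 - p) = phi (tk k) * T / (T - tk k)"
proof -
  have "norm (w k) = norm (u (tk k)) / A k" unfolding w_def using A_pos[of k] by simp
  then have "norm (w k) powr (2 - p) = norm (u (tk k)) powr (2 - p) / A k powr (2 - p)"
    by (simp add: powr_divide)
  also have "norm (u (tk k)) powr (2 - p) = phi (tk k)" by (simp add: norm_powr_inner)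
  also have "A k powr (2 - p) = (T - tk k) / T" unfolding A_pow using T_pos by (simp add: field_simps)
  finally show ?thesis using T_pos tk_lt[of k] by (simp add: field_simps)
qed

lemma wb_lo: "1 \<le> k \<Longrightarrow> (2 - p) * Linf * T \<le> norm (w k) powr (2 - p)"
proof -
  assume k: "1 \<le> k"
  have "(2 - p) * Linf * (T - tk k) \<le> phi (tk k)" using phi_lower tk_pos[OF k] tk_lt by blast
  then have "(2 - p) * Linf * (T - tk k) * (T / (T - tk k)) \<le> phi (tk k) * (T / (T - tk k))"
    using T_pos tk_lt[of k] by (intro mult_right_mono) auto
  moreover have "T - tk k \<noteq> 0" using tk_lt[of k] by simp
  then have "(2 - p) * Linf * (T - tk k) * (T / (T - tk k)) = (2 - p) * Linf * T"
    by simp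
  ultimately show ?thesis unfolding wnorm by simp
qed

lemma wb_up: "1 \<le> k \<Longrightarrow> norm (w k) powr (2 - p) \<le> (2 - p) * Lam (tk k) * T"
proof -
  assume k: "1 \<le> k"
  have "phi (tk k) \<le> (2 - p) * Lam (tk k) * (T - tk k)" using phi_upper tk_pos[OF k] tk_lt by blast
  then have "phi (tk k) * (T / (T - tk k)) \<le> (2 - p) * Lam (tk k) * (T - tk k) * (T / (T - tk k))"
    using T_pos tk_lt[of k] by (intro mult_right_mono) auto
  moreover have "T - tk k \<noteq> 0" using tk_lt[of k] by simp
  then have "(2 - p) * Lam (tk k) * (T - tk k) * (T / (T - tk k)) = (2 - p) * Lam (tk k) * T"
    by simp
  ultimately show ?thesis unfolding wnorm by simp
qed

lemma tk_filter: "filterlim tk (at_left T) sequentially"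
  using tk_lim by (rule tendsto_imp_filterlim_at_left) (use tk_lt in auto)

lemma Lam_tk: "(\<lambda>k. Lam (tk k)) \<longlonglongrightarrow> Linf"
  using filterlim_compose[OF Lam_tendsto tk_filter] .

lemma ev1: "eventually (\<lambda>k. 1 \<le> k) sequentially"
  by (rule eventually_ge_at_top)

lemma W_eq: "W powr (2 - p) = (2 - p) * Linf * T"
proof -
  have "(\<lambda>k. norm (w k)) \<longlonglongrightarrow> W" using w_lim' by (rule tendsto_norm)
  then have a: "(\<lambda>k. norm (w k) powr (2 - p)) \<longlonglongrightarrow> W powr (2 - p)"
    using p2 by (intro tendsto_powr' tendsto_const) auto
  have b: "(\<lambda>k. norm (w k) powr (2 - p)) \<longlonglongrightarrow> (2 - p) * Linf * T"
  proof (rule tendsto_sandwich[of "\<lambda>k. (2 - p) * Linf * T" _ _ "\<lambda>k. (2 - p) * Lam (tk k) * T"])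
    show "\<forall>\<^sub>F k in sequentially. (2 - p) * Linf * T \<le> norm (w k) powr (2 - p)"
      using ev1 by (rule eventually_mono) (rule wb_lo)
    show "\<forall>\<^sub>F k in sequentially. norm (w k) powr (2 - p) \<le> (2 - p) * Lam (tk k) * T"
      using ev1 by (rule eventually_mono) (rule wb_up)
    show "(\<lambda>k. (2 - p) * Lam (tk k) * T) \<longlonglongrightarrow> (2 - p) * Linf * T"
      by (intro tendsto_intros Lam_tk)
  qed simp
  show ?thesis using LIMSEQ_unique[OF a b] .
qed

lemma Linf_pos: "0 < Linf" using L1 L1_le_Linf by simp

lemma W_pos: "0 < W"
proof -
  have "0 < (2 - p) * Linf * T" using p2 Linf_pos T_pos by simp
  then have "W powr (2 - p) \<noteq> 0" using W_eq by linarith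
  then show ?thesis by (cases "W = 0") auto
qed

lemma ws_orth: "ws \<in> orthogonal_comp (null_set J)"
  unfolding orthogonal_comp_def
proof (intro CollectI ballI)
  fix n assume n: "n \<in> null_set J"
  have z: "n \<bullet> w k = 0" for k
  proof -
    have "u (tk k) \<in> orthogonal_comp (null_set J)" using u_orth tk_range by simp
    then have "n \<bullet> u (tk k) = 0" using n unfolding orthogonal_comp_def orthogonal_def by blast
    then show ?thesis unfolding w_def by simp
  qed
  have "(\<lambda>k. n \<bullet> w k) \<longlonglongrightarrow> n \<bullet> ws" using w_lim' by (intro tendsto_intros)
  then have "(\<lambda>k. 0) \<longlonglongrightarrow> n \<bullet> ws" unfolding z .
  then have "n \<bullet> ws = 0" using LIMSEQ_unique[OF _ tendsto_const] by blast
  then show "orthogonal n ws" unfolding orthogonal_def .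
qed

lemma ws_H0: "ws \<in> H0 J"
  unfolding H0_def using ws_orth W_pos by auto

lemma Jw: "1 \<le> k \<Longrightarrow> J (w k) = ereal (Lam (tk k) * norm (w k) powr p / p)"
proof -
  assume k: "1 \<le> k"
  have t: "0 < tk k" using tk_pos[OF k] .
  have ne: "u (tk k) \<noteq> 0" using before_T[of "tk k"] t tk_lt by simp
  have Np: "0 < N (tk k)" using ne by simp
  have "J (w k) = ereal ((1 / A k) powr p) * J (u (tk k))"
    unfolding w_def using A_pos[of k] by (intro J_hom_pos[OF adm p1]) simp
  also have "\<dots> = ereal ((1 / A k) powr p * g (tk k))"
  proof -
    obtain j where j: "J (u (tk k)) = ereal j" using Jfin[OF t] by blast
    show ?thesis unfolding j by simp
  qed
  also have "(1 / A k) powr p * g (tk k) = Lam (tk k) * norm (w k) powr p / p"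
  proof -
    have nw: "norm (w k) = norm (u (tk k)) / A k" unfolding w_def using A_pos[of k] by simp
    have nu: "norm (u (tk k)) powr p = N (tk k) powr (p / 2)" by (simp add: norm_powr_inner)
    have cancel: "N (tk k) powr (- p / 2) * N (tk k) powr (p / 2) = 1"
      using Np by (simp add: powr_add[symmetric])
    have "Lam (tk k) * norm (w k) powr p / p = g (tk k) * (N (tk k) powr (- p / 2) * N (tk k) powr (p / 2)) / A k powr p"
      unfolding nw powr_divide nu using p1 by (simp add: field_simps)
    also have "\<dots> = (1 / A k) powr p * g (tk k)" unfolding cancel by (simp add: powr_divide)
    finally show ?thesis by simp
  qed
  finally show ?thesis .
qed

lemma J_ws_le: "J ws \<le> ereal (Linf * W powr p / p)"
proof (rule lsc_seq[OF _ w_lim'])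
  show "lower_semicont J" using adm unfolding admissible_def by blast
  have nl: "(\<lambda>k. norm (w k)) \<longlonglongrightarrow> W" using w_lim' by (rule tendsto_norm)
  have "(\<lambda>k. norm (w k) powr p) \<longlonglongrightarrow> W powr p"
    by (rule tendsto_powr'[OF nl tendsto_const]) (use W_pos in simp)
  then have "(\<lambda>k. Lam (tk k) * norm (w k) powr p / p) \<longlonglongrightarrow> Linf * W powr p / p"
    using p1 by (intro tendsto_divide tendsto_mult Lam_tk tendsto_const) auto
  then have "(\<lambda>k. ereal (Lam (tk k) * norm (w k) powr p / p)) \<longlonglongrightarrow> ereal (Linf * W powr p / p)"
    by (rule tendsto_ereal)
  moreover have "\<forall>\<^sub>F k in sequentially. ereal (Lam (tk k) * norm (w k) powr p / p) = J (w k)"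
    using ev1 by (rule eventually_mono) (simp add: Jw)
  ultimately show "(\<lambda>k. J (w k)) \<longlonglongrightarrow> ereal (Linf * W powr p / p)"
    by (rule Lim_transform_eventually)
qed

end

context flowc begin

lemma EL:
  assumes e1: "norm e = 1" and x: "x \<in> orthogonal_comp (null_set J)" and rho: "0 < \<rho>"
  shows "ereal (\<rho> powr p * (L1 / p) + L1 * \<rho> powr (p - 1) * (e \<bullet> x - \<rho>)) \<le> J x"
proof -
  have p0: "0 < p" using p1 by simp
  have base: "ereal (L1 * norm x powr p / p) \<le> J x"
  proof (cases "x = 0")
    case True then show ?thesis using J_0[OF adm p1] by simp
  next
    case False
    then have xH: "x \<in> H0 J" using x unfolding H0_def by simp
    have le: "lambda1 p J \<le> rayleigh p J x" by (rule lam_le_ray[OF xH])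
    show ?thesis
    proof (cases "J x")
      case (real j)
      have "ereal L1 \<le> ereal (p * j / norm x powr p)"
        using le L1(1) rayleigh_eq[where x=x and J=J and j=j and p=p] False real by simp
      then have "L1 \<le> p * j / norm x powr p" by simp
      moreover have "0 < norm x powr p" using False by simp
      ultimately have "L1 * norm x powr p \<le> p * j" by (simp add: pos_le_divide_eq)
      then have "L1 * norm x powr p / p \<le> j" using p0 by (simp add: divide_le_eq mult.commute)
      then show ?thesis using real by simp
    next
      case PInf then show ?thesis by simp
    next
      case MInf then show ?thesis using J_not_minf[OF adm p1] by simp
    qed
  qed
  have tan: "\<rho> powr p + p * \<rho> powr (p - 1) * (norm x - \<rho>) \<le> norm x powr p"
    by (rule powr_tangent[OF p1 norm_ge_zero rho])
  have ex: "e \<bullet> x \<le> norm x" using norm_cauchy_schwarz[of e x] e1 by simp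
  have "L1 * \<rho> powr (p - 1) * (e \<bullet> x - \<rho>) \<le> L1 * \<rho> powr (p - 1) * (norm x - \<rho>)"
    using ex L1(2) by (intro mult_left_mono) auto
  moreover have "\<rho> powr p * (L1 / p) + L1 * \<rho> powr (p - 1) * (norm x - \<rho>)
      = (L1 / p) * (\<rho> powr p + p * \<rho> powr (p - 1) * (norm x - \<rho>))"
    using p0 by (simp add: field_simps)
  moreover have "(L1 / p) * (\<rho> powr p + p * \<rho> powr (p - 1) * (norm x - \<rho>)) \<le> (L1 / p) * norm x powr p"
    using tan L1(2) p0 by (intro mult_left_mono) auto
  ultimately have "\<rho> powr p * (L1 / p) + L1 * \<rho> powr (p - 1) * (e \<bullet> x - \<rho>) \<le> L1 * norm x powr p / p"
    by simp
  then have "ereal (\<rho> powr p * (L1 / p) + L1 * \<rho> powr (p - 1) * (e \<bullet> x - \<rho>)) \<le> ereal (L1 * norm x powr p / p)"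
    by simp
  then show ?thesis using base by (rule order.trans)
qed

end

context profile begin

lemma no_gap:
  assumes jws: "J ws = ereal jws" and pj: "p * jws = L1 * W powr p"
  shows "Linf \<le> L1"
proof (rule ccontr)
  assume "\<not> Linf \<le> L1"
  then have gap: "L1 < Linf" by simp
  have p0: "0 < p" using p1 by simp
  define q where "q = 1 / (2 - p)"
  have q2: "q * (2 - p) = 1" unfolding q_def using p2 by simp
  have qp: "q * (p - 1) = q - 1" unfolding q_def using p2 by (simp add: field_simps)
  define e where "e = (1 / W) *\<^sub>R ws"
  have e1: "norm e = 1" unfolding e_def using W_pos by simp
  have ee: "e \<bullet> e = 1" using e1 by (simp add: norm_eq_1)
  have Je: "J e = ereal (L1 / p)"
  proof -
    have "J e = ereal ((1 / W) powr p) * J ws" unfolding e_def using W_pos by (intro J_hom_pos[OF adm p1]) simp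
    also have "\<dots> = ereal (jws / W powr p)" using jws by (simp add: powr_divide)
    also have "jws / W powr p = L1 / p"
      using pj p0 W_pos by (simp add: field_simps)
    finally show ?thesis .
  qed
  define c0 where "c0 = ((2 - p) * (Linf - L1) * T) powr q"
  have c0: "0 < c0" unfolding c0_def using gap p2 T_pos by simp
  obtain k where k: "1 \<le> k" "norm (w k - ws) < c0"
  proof -
    have "eventually (\<lambda>k. dist (w k) ws < c0) sequentially" using w_lim' c0 by (rule tendstoD)
    then obtain N where "\<And>k. k \<ge> N \<Longrightarrow> dist (w k) ws < c0" unfolding eventually_sequentially by blast
    then show ?thesis using that[of "max N 1"] by (simp add: dist_norm)
  qed
  define s where "s = tk k"
  define a where "a = A k"
  have s: "0 < s" "s < T" unfolding s_def using tk_pos[OF k(1)] tk_lt by auto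
  have a: "0 < a" unfolding a_def by (rule A_pos)
  define c where "c = (2 - p) * L1"
  have cpos: "0 < c" unfolding c_def using p2 L1 by simp
  define D where "D t = (a * W) powr (2 - p) - c * (t - s)" for t
  have aW: "(a * W) powr (2 - p) = (2 - p) * Linf * (T - s)"
  proof -
    have "(a * W) powr (2 - p) = a powr (2 - p) * W powr (2 - p)" by (rule powr_mult)
    also have "\<dots> = (1 - s / T) * ((2 - p) * Linf * T)" unfolding a_def s_def A_pow W_eq ..
    also have "\<dots> = (2 - p) * Linf * (T - s)" using T_pos by (simp add: field_simps)
    finally show ?thesis .
  qed
  have DT: "D T = ((2 - p) * (Linf - L1) * T) * (1 - s / T)"
    unfolding D_def aW c_def using T_pos by (simp add: field_simps)
  have DTpos: "0 < D T" unfolding DT using gap p2 T_pos frac_pos[of k] s_def by simp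
  have Dpos: "0 < D t" if "t \<le> T" for t
  proof -
    have "D T \<le> D t" unfolding D_def using that cpos by (simp add: mult_left_mono)
    then show ?thesis using DTpos by simp
  qed
  define V where "V t = (D t powr q) *\<^sub>R e" for t
  define \<eta> where "\<eta> t = (L1 * (D t powr q) powr (p - 1)) *\<^sub>R e" for t
  have contr: "norm (u T - V T) \<le> norm (u s - V s)"
  proof (rule contraction[where a = \<zeta> and b = \<eta>])
    show "s \<le> T" using s by simp
    show "continuous_on {s..T} u" using ucont_sub s by simp
    have cD: "continuous_on {s..T} D" unfolding D_def by (intro continuous_intros)
    have "continuous_on {s..T} (\<lambda>t. D t powr q)"
      using cD Dpos by (intro continuous_on_powr continuous_on_const) (auto simp: less_imp_neq[symmetric])
    then show "continuous_on {s..T} V" unfolding V_def by (intro continuous_on_scaleR continuous_on_const)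
    fix t assume t: "s < t" "t < T"
    show "(u has_vector_derivative - \<zeta> t) (at_right t)" using uder t s by simp
    have Dt: "0 < D t" using Dpos t by simp
    have dD: "(D has_real_derivative - c) (at_right t)"
    proof -
      have "(D has_real_derivative 0 - c * (1 - 0)) (at_right t)"
        unfolding D_def by (intro DERIV_diff DERIV_const DERIV_cmult DERIV_ident)
      then show ?thesis by simp
    qed
    have dDq: "((\<lambda>t. D t powr q) has_real_derivative q * D t powr (q - 1) * (- c)) (at_right t)"
      using DERIV_chain[OF has_real_derivative_powr[OF Dt] dD] by (simp add: o_def)
    have "(V has_vector_derivative (D t powr q *\<^sub>R 0 + (q * D t powr (q - 1) * (- c)) *\<^sub>R e)) (at_right t)"
      unfolding V_def by (intro has_vector_derivative_scaleR dDq has_vector_derivative_const)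
    moreover have "D t powr q *\<^sub>R 0 + (q * D t powr (q - 1) * (- c)) *\<^sub>R e = - \<eta> t"
    proof -
      have "(D t powr q) powr (p - 1) = D t powr (q - 1)" by (simp add: powr_powr qp)
      moreover have "q * c = L1" unfolding q_def c_def using p2 by simp
      moreover have "q * D t powr (q - 1) * c = (q * c) * D t powr (q - 1)" by (simp add: ac_simps)
      ultimately have "q * D t powr (q - 1) * c = L1 * (D t powr q) powr (p - 1)"
        by simp
      then have H2: "q * D t powr (q - 1) * (- c) = - (L1 * (D t powr q) powr (p - 1))" by simp
      show ?thesis unfolding \<eta>_def scaleR_zero_right add_0_left H2 scaleR_minus_left ..
    qed
    ultimately show "(V has_vector_derivative - \<eta> t) (at_right t)" by simp
    define \<rho> where "\<rho> = D t powr q"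
    have rho: "0 < \<rho>" unfolding \<rho>_def using Dt by simp
    have tpos: "0 < t" using t s by simp
    have JV: "J (V t) = ereal (\<rho> powr p * (L1 / p))"
      unfolding V_def \<rho>_def[symmetric] using J_hom_pos[OF adm p1 rho, of e] Je by simp
    have A1: "g t + \<zeta> t \<bullet> (V t - u t) \<le> \<rho> powr p * (L1 / p)"
      using subgrad_ineq[OF adm p1 zsub[OF tpos] JV] .
    have A2: "\<rho> powr p * (L1 / p) + L1 * \<rho> powr (p - 1) * (e \<bullet> u t - \<rho>) \<le> g t"
    proof -
      have "ereal (\<rho> powr p * (L1 / p) + L1 * \<rho> powr (p - 1) * (e \<bullet> u t - \<rho>)) \<le> J (u t)"
        using EL[OF e1 u_orth rho] tpos by simp
      moreover obtain j where j: "J (u t) = ereal j" using Jfin[OF tpos] by blast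
      ultimately show ?thesis by simp
    qed
    have eta_eq: "\<eta> t \<bullet> (u t - V t) = L1 * \<rho> powr (p - 1) * (e \<bullet> u t - \<rho>)"
      unfolding \<eta>_def V_def \<rho>_def[symmetric] using ee
      by (simp add: inner_diff_right algebra_simps)
    have "(\<zeta> t - \<eta> t) \<bullet> (u t - V t) = \<zeta> t \<bullet> (u t - V t) - \<eta> t \<bullet> (u t - V t)"
      by (simp add: inner_diff_left)
    moreover have "\<zeta> t \<bullet> (u t - V t) = - (\<zeta> t \<bullet> (V t - u t))" by (simp add: inner_diff_right)
    ultimately show "0 \<le> (\<zeta> t - \<eta> t) \<bullet> (u t - V t)" using A1 A2 eta_eq by linarith
  qed
  have lhs: "norm (u T - V T) = c0 * a"
  proof -
    have "norm (u T - V T) = D T powr q" unfolding V_def using u_T e1 by simp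
    also have "\<dots> = ((2 - p) * (Linf - L1) * T) powr q * (1 - s / T) powr q" unfolding DT by (rule powr_mult)
    also have "\<dots> = c0 * a" unfolding c0_def a_def A_def s_def q_def ..
    finally show ?thesis .
  qed
  have rhs: "norm (u s - V s) = a * norm (w k - ws)"
  proof -
    have "D s powr q = a * W" unfolding D_def using q2 a W_pos by (simp add: powr_powr mult.commute)
    then have "V s = a *\<^sub>R ws" unfolding V_def e_def using W_pos by simp
    moreover have "u s = a *\<^sub>R w k" unfolding s_def a_def by (rule u_eq)
    ultimately have "u s - V s = a *\<^sub>R (w k - ws)" by (simp add: scaleR_diff_right)
    then show ?thesis using a by simp
  qed
  have "c0 * a \<le> a * norm (w k - ws)" using contr lhs rhs by simp
  then have "c0 \<le> norm (w k - ws)" using a by (simp add: mult.commute)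
  then show False using k(2) by simp
qed

lemma ray_tendsto: "((\<lambda>t. rayleigh p J (u t)) \<longlongrightarrow> ereal Linf) (at_left T)"
proof -
  have "((\<lambda>t. ereal (Lam t)) \<longlongrightarrow> ereal Linf) (at_left T)" using Lam_tendsto by (rule tendsto_ereal)
  moreover have "\<forall>\<^sub>F t in at_left T. ereal (Lam t) = rayleigh p J (u t)"
    unfolding eventually_at_left_field
  proof (intro exI[of _ 0] conjI allI impI)
    show "0 < T" by (rule T_pos)
    fix t :: real assume "0 < t" "t < T"
    then show "ereal (Lam t) = rayleigh p J (u t)" using ray_Lam before_T by simp
  qed
  ultimately show ?thesis by (rule Lim_transform_eventually)
qed

lemma main: "ground_state p J ws \<longleftrightarrow> ((\<lambda>t. rayleigh p J (u t)) \<longlongrightarrow> lambda1 p J) (at_left T)"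
proof -
  have nb: "at_left T \<noteq> bot" by simp
  have iff: "((\<lambda>t. rayleigh p J (u t)) \<longlongrightarrow> lambda1 p J) (at_left T) \<longleftrightarrow> Linf = L1"
  proof
    assume "((\<lambda>t. rayleigh p J (u t)) \<longlongrightarrow> lambda1 p J) (at_left T)"
    then have "lambda1 p J = ereal Linf" using tendsto_unique[OF nb _ ray_tendsto] by blast
    then show "Linf = L1" using L1(1) by simp
  next
    assume "Linf = L1"
    then show "((\<lambda>t. rayleigh p J (u t)) \<longlongrightarrow> lambda1 p J) (at_left T)" using ray_tendsto L1(1) by simp
  qed
  have p0: "0 < p" using p1 by simp
  have Wp: "0 < W powr p" using W_pos by simp
  have "ground_state p J ws \<longleftrightarrow> Linf = L1"
  proof
    assume gs: "ground_state p J ws"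
    have "rayleigh p J ws \<le> lambda1 p J"
      using gs unfolding ground_state_def lambda1_def by (auto intro: INF_greatest)
    moreover have "lambda1 p J \<le> rayleigh p J ws" by (rule lam_le_ray[OF ws_H0])
    ultimately have req: "rayleigh p J ws = ereal L1" using L1(1) by simp
    obtain jws where jws: "J ws = ereal jws"
    proof (cases "J ws")
      case (real r) then show ?thesis using that by blast
    next
      case PInf
      then have "rayleigh p J ws = \<infinity>" unfolding rayleigh_def using p0 Wp by (simp add: divide_ereal_def)
      then show ?thesis using req by simp
    next
      case MInf then show ?thesis using J_not_minf[OF adm p1] by simp
    qed
    have "ereal (p * jws / W powr p) = ereal L1"
      using req rayleigh_eq[where x=ws and J=J and j=jws and p=p] W_pos jws by simp
    then have "p * jws = L1 * W powr p" using Wp by (simp add: field_simps)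
    then have "Linf \<le> L1" by (rule no_gap[OF jws])
    then show "Linf = L1" using L1_le_Linf by simp
  next
    assume eq: "Linf = L1"
    have le: "J ws \<le> ereal (L1 * W powr p / p)" using J_ws_le eq by simp
    obtain jws where jws: "J ws = ereal jws" "jws \<le> L1 * W powr p / p"
    proof (cases "J ws")
      case (real r) then show ?thesis using that le by simp
    next
      case PInf then show ?thesis using le by simp
    next
      case MInf then show ?thesis using J_not_minf[OF adm p1] by simp
    qed
    have "p * jws \<le> L1 * W powr p" using jws(2) p0 by (simp add: field_simps)
    then have "p * jws / W powr p \<le> L1" using Wp by (simp add: divide_le_eq)
    then have rle: "rayleigh p J ws \<le> lambda1 p J"
      using rayleigh_eq[where x=ws and J=J and j=jws and p=p] W_pos jws(1) L1(1) by simp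
    show "ground_state p J ws"
      unfolding ground_state_def
    proof (intro conjI ballI)
      show "ws \<in> H0 J" by (rule ws_H0)
      fix v assume "v \<in> H0 J"
      then have "lambda1 p J \<le> rayleigh p J v" by (rule lam_le_ray)
      with rle show "rayleigh p J ws \<le> rayleigh p J v" by (rule order.trans)
    qed
  qed
  then show ?thesis using iff by simp
qed

end

theorem corollary6:
  fixes J :: "'a::{real_inner,complete_space} \<Rightarrow> ereal"
    and p :: real and f w_star :: 'a and u :: "real \<Rightarrow> 'a"
  assumes p: "1 \<le> p" "p < 2"
    and J: "admissible p J"
    and coercive: "lambda1 p J > 0"
    and f: "f \<in> H0 J"
    and flow: "gradient_flow J f u"
    and profile: "\<exists>tk :: nat \<Rightarrow> real. strict_mono tk \<and> (\<forall>k. 0 \<le> tk k \<and> tk k < extinction_time u) \<and>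
        tk \<longlonglongrightarrow> extinction_time u \<and>
        (\<lambda>k. (1 / (1 - tk k / extinction_time u) powr (1 / (2 - p))) *\<^sub>R u (tk k)) \<longlonglongrightarrow> w_star"
  shows "ground_state p J w_star \<longleftrightarrow>
         ((\<lambda>t. rayleigh p J (u t)) \<longlongrightarrow> lambda1 p J) (at_left (extinction_time u))"
proof -
  have "\<forall>t. \<exists>z. t > 0 \<longrightarrow> (min_norm_subgrad J (u t) z \<and> (u has_vector_derivative - z) (at t within {t..}))"
    using flow unfolding gradient_flow_def by blast
  then obtain \<zeta> where z: "\<forall>t. t > 0 \<longrightarrow> (min_norm_subgrad J (u t) (\<zeta> t) \<and> (u has_vector_derivative - \<zeta> t) (at t within {t..}))"
    using choice[of "\<lambda>t z. t > 0 \<longrightarrow> (min_norm_subgrad J (u t) z \<and> (u has_vector_derivative - z) (at t within {t..}))"] by blast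
  obtain tk where tk: "strict_mono tk" "\<forall>k. 0 \<le> tk k \<and> tk k < extinction_time u"
      "tk \<longlonglongrightarrow> extinction_time u"
      "(\<lambda>k. (1 / (1 - tk k / extinction_time u) powr (1 / (2 - p))) *\<^sub>R u (tk k)) \<longlonglongrightarrow> w_star"
    using profile by blast
  interpret pr: profile p J f u \<zeta> tk w_star
  proof (unfold_locales)
    show "admissible p J" by (rule J)
    show "1 \<le> p" by (rule p(1))
    show "p < 2" by (rule p(2))
    show "f \<in> H0 J" by (rule f)
    show "continuous_on {0..} u" using flow unfolding gradient_flow_def by blast
    show "u 0 = f" using flow unfolding gradient_flow_def by blast
    show "\<And>t. t > 0 \<Longrightarrow> min_norm_subgrad J (u t) (\<zeta> t)" using z by blast
    show "\<And>t. t > 0 \<Longrightarrow> (u has_vector_derivative - \<zeta> t) (at_right t)"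
      using z by (simp add: at_within_Ici_at_right)
    show "lambda1 p J > 0" by (rule coercive)
    show "strict_mono tk" by (rule tk(1))
    show "\<And>k. 0 \<le> tk k \<and> tk k < extinction_time u" using tk(2) by blast
    show "tk \<longlonglongrightarrow> extinction_time u" by (rule tk(3))
    show "(\<lambda>k. (1 / (1 - tk k / extinction_time u) powr (1 / (2 - p))) *\<^sub>R u (tk k)) \<longlonglongrightarrow> w_star" by (rule tk(4))
  qed
  show ?thesis by (rule pr.main)
qed

end
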